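(* Let $P_0$ be a probability measure on $[-a,a]^d\subset\mathbb{R}^d$. For any $\varepsilon>0$ and $\sigma>0$ there is a discrete probability measure $F^*_\sigma$ on $[-a,a]^d$ with at most $N_{\sigma,\varepsilon}=D[\{(a/\sigma)\vee1\}\log(1/\varepsilon)]^d$ support points, all in the grid $\{(n_1,\dots,n_d)\sigma\varepsilon: n_i\in\mathbb{Z},\ |n_i|<\lceil a/(\sigma\varepsilon)\rceil,\ i=1,\dots,d\}$, such that $\|p_{P_0,\sigma}-p_{F^*_\sigma,\sigma}\|_\infty\lesssim\varepsilon/\sigma^d$ and $\|p_{P_0,\sigma}-p_{F^*_\sigma,\sigma}\|_1\lesssim\varepsilon\{\log(1/\varepsilon)\}^{1/2}$, where $D$ is a universal constant.
   Context: $\phi_\sigma$ is the density of $N(0,\sigma^2I_d)$ and, for a probability measure $F$ on $\mathbb{R}^d$, $p_{F,\sigma}(x)=\int\phi_\sigma(x-z)\,dF(z)$. $\lesssim$ means inequality up to a universal constant (not depending on $\varepsilon,\sigma,P_0$). *)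

theory Defs
  imports "HOL-Probability.Probability"
begin

definition gauss_dens :: "real \<Rightarrow> real^'n \<Rightarrow> real" where
  "gauss_dens \<sigma> x =
     (2 * pi * \<sigma>\<^sup>2) powr (- real CARD('n) / 2) * exp (- (norm x)\<^sup>2 / (2 * \<sigma>\<^sup>2))"

definition mix_dens :: "(real^'n) measure \<Rightarrow> real \<Rightarrow> real^'n \<Rightarrow> real" where
  "mix_dens F \<sigma> x = (\<integral>z. gauss_dens \<sigma> (x - z) \<partial>F)"

definition cube :: "real \<Rightarrow> (real^'n) set" where
  "cube a = {x. \<forall>i. \<bar>x $ i\<bar> \<le> a}"

definition grid :: "real \<Rightarrow> real \<Rightarrow> real \<Rightarrow> (real^'n) set" where
  "grid a \<sigma> \<epsilon> = {x. \<exists>n :: 'n \<Rightarrow> int.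
      (\<forall>i. \<bar>n i\<bar> < \<lceil>a / (\<sigma> * \<epsilon>)\<rceil> \<and> x $ i = real_of_int (n i) * \<sigma> * \<epsilon>)}"

end

theory Submission
  imports Defs
begin


lemma lin_dep:
  fixes m :: "'t \<Rightarrow> 'z \<Rightarrow> real"
  assumes "finite T"
  shows "finite Z \<Longrightarrow> card T < card Z \<Longrightarrow>
    \<exists>l. (\<exists>z\<in>Z. l z \<noteq> 0) \<and> (\<forall>t\<in>T. (\<Sum>z\<in>Z. l z * m t z) = 0)"
  using assms
proof (induction T arbitrary: Z m rule: finite_induct)
  case empty
  then obtain z where "z \<in> Z" by fastforce
  then show ?case by (intro exI[of _ "\<lambda>_. 1"]) auto
next
  case (insert t0 T)
  show ?case
  proof (cases "\<forall>z\<in>Z. m t0 z = 0")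
    case True
    from insert.IH[of Z m] insert.prems insert.hyps obtain l where
      l: "\<exists>z\<in>Z. l z \<noteq> 0" "\<forall>t\<in>T. (\<Sum>z\<in>Z. l z * m t z) = 0" by auto
    show ?thesis using l True by (intro exI[of _ l]) auto
  next
    case False
    then obtain z0 where z0: "z0 \<in> Z" "m t0 z0 \<noteq> 0" by auto
    define m' where "m' t z = m t z - m t z0 * m t0 z / m t0 z0" for t z
    have "card T < card (Z - {z0})"
      using insert.prems insert.hyps z0 by (simp add: card_Diff_singleton)
    from insert.IH[of "Z - {z0}" m'] this insert.prems obtain mu where
      mu: "\<exists>z\<in>Z-{z0}. mu z \<noteq> 0" "\<forall>t\<in>T. (\<Sum>z\<in>Z-{z0}. mu z * m' t z) = 0" by auto
    define l where "l z = (if z = z0 then - (\<Sum>y\<in>Z-{z0}. mu y * m t0 y) / m t0 z0 else mu z)" for z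
    have split: "(\<Sum>z\<in>Z. l z * m t z) = l z0 * m t z0 + (\<Sum>z\<in>Z-{z0}. mu z * m t z)" for t
      using insert.prems z0 by (simp add: sum.remove l_def)
    have "\<forall>t\<in>insert t0 T. (\<Sum>z\<in>Z. l z * m t z) = 0"
    proof
      fix t assume t: "t \<in> insert t0 T"
      show "(\<Sum>z\<in>Z. l z * m t z) = 0"
      proof (cases "t = t0")
        case True
        show ?thesis unfolding True split using z0 by (simp add: l_def)
      next
        case False
        then have tT: "t \<in> T" using t by auto
        have "(\<Sum>z\<in>Z-{z0}. mu z * m' t z) = (\<Sum>z\<in>Z-{z0}. mu z * m t z)
              - m t z0 / m t0 z0 * (\<Sum>z\<in>Z-{z0}. mu z * m t0 z)"
          by (simp add: m'_def right_diff_distrib sum_subtractf sum_distrib_left mult_ac)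
        then have "(\<Sum>z\<in>Z-{z0}. mu z * m t z) = m t z0 / m t0 z0 * (\<Sum>z\<in>Z-{z0}. mu z * m t0 z)"
          using mu(2) tT by simp
        then show ?thesis unfolding split by (simp add: l_def)
      qed
    qed
    moreover have "\<exists>z\<in>Z. l z \<noteq> 0" using mu(1) by (auto simp: l_def)
    ultimately show ?thesis by blast
  qed
qed

lemma caratheodory_weights:
  fixes m :: "'t \<Rightarrow> 'z \<Rightarrow> real"
  assumes T: "finite T" and S: "finite S"
  shows "(\<forall>z. 0 \<le> q z) \<Longrightarrow> \<exists>f. (\<forall>z. 0 \<le> f z) \<and> (\<forall>z. f z \<noteq> 0 \<longrightarrow> z \<in> S \<and> q z \<noteq> 0) \<and>
     card {z\<in>S. f z \<noteq> 0} \<le> card T \<and>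
     (\<forall>t\<in>T. (\<Sum>z\<in>S. f z * m t z) = (\<Sum>z\<in>S. q z * m t z))"
proof (induction "card {z\<in>S. q z \<noteq> 0}" arbitrary: q rule: less_induct)
  case less
  define Z where "Z = {z\<in>S. q z \<noteq> 0}"
  have Zfin: "finite Z" using S by (simp add: Z_def)
  show ?case
  proof (cases "card Z \<le> card T")
    case True
    define f where "f z = (if z \<in> S then q z else 0)" for z
    have "{z\<in>S. f z \<noteq> 0} = Z" by (auto simp: f_def Z_def)
    then show ?thesis using True less.prems
      by (intro exI[of _ f]) (auto simp: f_def intro!: sum.cong)
  next
    case False
    then obtain l0 where l0: "\<exists>z\<in>Z. l0 z \<noteq> 0" "\<forall>t\<in>T. (\<Sum>z\<in>Z. l0 z * m t z) = 0"
      using lin_dep[OF T Zfin, of m] by auto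
    have "\<exists>l. (\<exists>z\<in>Z. l z > 0) \<and> (\<forall>t\<in>T. (\<Sum>z\<in>Z. l z * m t z) = 0)"
    proof (cases "\<exists>z\<in>Z. l0 z > 0")
      case True then show ?thesis using l0 by blast
    next
      case False
      then have "\<exists>z\<in>Z. - l0 z > 0" using l0(1) by force
      moreover have "\<forall>t\<in>T. (\<Sum>z\<in>Z. (- l0 z) * m t z) = 0"
        using l0(2) by (simp add: sum_negf)
      ultimately show ?thesis by (intro exI[of _ "\<lambda>z. - l0 z"]) simp
    qed
    then obtain l where l: "\<exists>z\<in>Z. l z > 0" "\<forall>t\<in>T. (\<Sum>z\<in>Z. l z * m t z) = 0" by blast
    define R where "R = (\<lambda>z. q z / l z) ` {z\<in>Z. l z > 0}"
    have Rfin: "finite R" "R \<noteq> {}" using Zfin l(1) by (auto simp: R_def)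
    define s where "s = Min R"
    obtain zs where zs: "zs \<in> Z" "l zs > 0" "s = q zs / l zs"
      using Min_in[OF Rfin] by (auto simp: s_def R_def)
    have sle: "s \<le> q z / l z" if "z \<in> Z" "l z > 0" for z
      using Min_le[OF Rfin(1)] that by (auto simp: s_def R_def)
    have s0: "s \<ge> 0" using zs less.prems by auto
    define q' where "q' z = (if z \<in> Z then q z - s * l z else 0)" for z
    have q'nn: "\<forall>z. 0 \<le> q' z"
    proof
      fix z show "0 \<le> q' z"
      proof (cases "z \<in> Z \<and> l z > 0")
        case True then show ?thesis using sle[of z] by (auto simp: q'_def field_simps)
      next
        case False
        have "z \<in> Z \<Longrightarrow> s * l z \<le> 0" using False s0 mult_nonneg_nonpos[of s "l z"] by auto
        then show ?thesis using less.prems[rule_format, of z] by (auto simp: q'_def)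
      qed
    qed
    have "{z\<in>S. q' z \<noteq> 0} \<subseteq> Z - {zs}" using zs by (auto simp: q'_def)
    then have "card {z\<in>S. q' z \<noteq> 0} \<le> card (Z - {zs})" using Zfin by (intro card_mono) auto
    also have "\<dots> < card Z" using zs Zfin by (meson card_Diff1_less)
    finally have lt: "card {z\<in>S. q' z \<noteq> 0} < card {z\<in>S. q z \<noteq> 0}" by (simp add: Z_def)
    obtain f where f: "\<forall>z. 0 \<le> f z" "\<forall>z. f z \<noteq> 0 \<longrightarrow> z \<in> S \<and> q' z \<noteq> 0"
      "card {z\<in>S. f z \<noteq> 0} \<le> card T" "\<forall>t\<in>T. (\<Sum>z\<in>S. f z * m t z) = (\<Sum>z\<in>S. q' z * m t z)"
      using less.hyps[OF lt q'nn] by blast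
    have mom: "(\<Sum>z\<in>S. q' z * m t z) = (\<Sum>z\<in>S. q z * m t z)" if "t \<in> T" for t
    proof -
      have ZS: "Z \<subseteq> S" by (auto simp: Z_def)
      have "(\<Sum>z\<in>S. q' z * m t z) = (\<Sum>z\<in>Z. q' z * m t z)"
        using S ZS by (intro sum.mono_neutral_right) (auto simp: q'_def)
      also have "\<dots> = (\<Sum>z\<in>Z. q z * m t z) - s * (\<Sum>z\<in>Z. l z * m t z)"
        by (simp add: q'_def algebra_simps sum_subtractf sum_distrib_left)
      also have "\<dots> = (\<Sum>z\<in>Z. q z * m t z)" using l(2) that by simp
      also have "\<dots> = (\<Sum>z\<in>S. q z * m t z)"
        using S ZS by (intro sum.mono_neutral_left) (auto simp: Z_def)
      finally show ?thesis .
    qed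
    have "\<forall>z. f z \<noteq> 0 \<longrightarrow> z \<in> S \<and> q z \<noteq> 0" using f(2) by (auto simp: q'_def Z_def)
    then show ?thesis using f mom by auto
  qed
qed



definition boxn :: "nat \<Rightarrow> ('n::finite \<Rightarrow> nat) set" where "boxn M = {a. \<forall>i. a i \<le> M}"
definition mnm :: "('n::finite \<Rightarrow> nat) \<Rightarrow> real^'n \<Rightarrow> real" where
  "mnm a v = (\<Prod>i\<in>UNIV. (v$i)^(a i))"
definition lincomb :: "nat \<Rightarrow> (real^'n::finite \<Rightarrow> real) \<Rightarrow> bool" where
  "lincomb M h \<longleftrightarrow> (\<exists>c. \<forall>v. h v = (\<Sum>a\<in>boxn M. c a * mnm a v))"

lemma boxn_eq: "boxn M = PiE UNIV (\<lambda>_. {..M})"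
  by (auto simp: boxn_def PiE_UNIV_domain)

lemma finite_boxn[simp]: "finite (boxn M)"
  unfolding boxn_eq by (intro finite_PiE) auto

lemma card_boxn: "card (boxn M :: ('n::finite \<Rightarrow> nat) set) = (M+1) ^ CARD('n)"
  unfolding boxn_eq by (simp add: card_PiE)

lemma lincomb_mnm: "a \<in> boxn M \<Longrightarrow> lincomb M (mnm a)"
  unfolding lincomb_def
proof (intro exI[of _ "\<lambda>b. if b = a then 1 else 0"] allI)
  fix v assume a: "a \<in> boxn M"
  have "(\<Sum>b\<in>boxn M. (if b = a then 1 else 0) * mnm b v) = (\<Sum>b\<in>boxn M. if b = a then mnm b v else 0)"
    by (intro sum.cong) auto
  also have "\<dots> = mnm a v" using a by (simp add: sum.delta')
  finally show "mnm a v = (\<Sum>b\<in>boxn M. (if b = a then 1 else 0) * mnm b v)" by simp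
qed

lemma lincomb_zero: "lincomb M (\<lambda>v. 0)"
  unfolding lincomb_def by (rule exI[of _ "\<lambda>_. 0"]) simp

lemma lincomb_add: "lincomb M f \<Longrightarrow> lincomb M g \<Longrightarrow> lincomb M (\<lambda>v. f v + g v)"
  unfolding lincomb_def
proof (elim exE)
  fix c d assume c: "\<forall>v. f v = (\<Sum>a\<in>boxn M. c a * mnm a v)" and d: "\<forall>v. g v = (\<Sum>a\<in>boxn M. d a * mnm a v)"
  show "\<exists>e. \<forall>v. f v + g v = (\<Sum>a\<in>boxn M. e a * mnm a v)"
    by (rule exI[of _ "\<lambda>a. c a + d a"]) (simp add: c d distrib_right sum.distrib)
qed

lemma lincomb_scale: "lincomb M f \<Longrightarrow> lincomb M (\<lambda>v. r * f v)"
  unfolding lincomb_def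
proof (elim exE)
  fix c assume c: "\<forall>v. f v = (\<Sum>a\<in>boxn M. c a * mnm a v)"
  show "\<exists>e. \<forall>v. r * f v = (\<Sum>a\<in>boxn M. e a * mnm a v)"
    by (rule exI[of _ "\<lambda>a. r * c a"]) (simp add: c sum_distrib_left mult_ac)
qed

lemma lincomb_sum: "finite I \<Longrightarrow> (\<And>i. i \<in> I \<Longrightarrow> lincomb M (h i)) \<Longrightarrow> lincomb M (\<lambda>v. \<Sum>i\<in>I. h i v)"
  by (induction I rule: finite_induct) (auto intro: lincomb_add lincomb_zero)

lemma lincomb_mono: "M \<le> M' \<Longrightarrow> lincomb M f \<Longrightarrow> lincomb M' f"
proof -
  assume MM: "M \<le> M'" and "lincomb M f"
  then obtain c where c: "\<forall>v. f v = (\<Sum>a\<in>boxn M. c a * mnm a v)" unfolding lincomb_def by blast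
  have sub: "boxn M \<subseteq> boxn M'" using MM by (auto simp: boxn_def intro: order_trans)
  have e: "f v = (\<Sum>a\<in>boxn M'. (if a \<in> boxn M then c a else 0) * mnm a v)" for v
    unfolding c[rule_format] using sub by (intro sum.mono_neutral_cong_left) auto
  show ?thesis unfolding lincomb_def by (intro exI[of _ "\<lambda>a. if a \<in> boxn M then c a else 0"] allI e)
qed

lemma mnm_mult: "mnm a v * mnm b v = mnm (\<lambda>i. a i + b i) v"
  by (simp add: mnm_def power_add prod.distrib)

lemma lincomb_mult: "lincomb M f \<Longrightarrow> lincomb M' g \<Longrightarrow> lincomb (M + M') (\<lambda>v. f v * g v)"
proof -
  assume "lincomb M f" "lincomb M' g"
  then obtain c d where c: "\<forall>v. f v = (\<Sum>a\<in>boxn M. c a * mnm a v)"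
    and d: "\<forall>v. g v = (\<Sum>a\<in>boxn M'. d a * mnm a v)" unfolding lincomb_def by blast
  have eq: "f v * g v = (\<Sum>a\<in>boxn M. \<Sum>b\<in>boxn M'. (c a * d b) * mnm (\<lambda>i. a i + b i) v)" for v
    unfolding c[rule_format] d[rule_format] sum_product
    by (intro sum.cong refl) (simp add: mnm_mult[symmetric] mult_ac)
  have "lincomb (M + M') (\<lambda>v. \<Sum>a\<in>boxn M. \<Sum>b\<in>boxn M'. (c a * d b) * mnm (\<lambda>i. a i + b i) v)"
    by (intro lincomb_sum lincomb_scale lincomb_mnm finite_boxn) (auto simp: boxn_def add_mono)
  then show ?thesis using eq by simp
qed

lemma lincomb_ann:
  assumes "finite Z" "\<forall>a\<in>boxn M. (\<Sum>z\<in>Z. w z * mnm a (v z)) = 0" "lincomb M h"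
  shows "(\<Sum>z\<in>Z. w z * h (v z)) = 0"
proof -
  obtain c where c: "\<forall>v. h v = (\<Sum>a\<in>boxn M. c a * mnm a v)" using assms(3) unfolding lincomb_def by blast
  have "(\<Sum>z\<in>Z. w z * h (v z)) = (\<Sum>a\<in>boxn M. c a * (\<Sum>z\<in>Z. w z * mnm a (v z)))"
    unfolding c[rule_format] sum_distrib_left by (subst sum.swap) (simp add: mult_ac)
  then show ?thesis using assms(2) by simp
qed

definition pq :: "real^'n::finite \<Rightarrow> real^'n \<Rightarrow> real" where
  "pq u v = (\<Sum>i\<in>UNIV. u$i * v$i - (v$i)^2/2)"

lemma mnm_unit: "mnm (\<lambda>j. if j = i then k else 0) v = (v$i)^k"
  by (simp add: mnm_def if_distrib prod.delta cong: if_cong)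

lemma lincomb_pq: "lincomb 2 (pq u)"
proof -
  have "lincomb 2 (\<lambda>v. \<Sum>i\<in>UNIV. u$i * mnm (\<lambda>j. if j = i then 1 else 0) v
        + (-1/2) * mnm (\<lambda>j. if j = i then 2 else 0) v)"
    by (intro lincomb_sum lincomb_add lincomb_scale lincomb_mnm) (auto simp: boxn_def)
  then show ?thesis unfolding mnm_unit by (simp add: pq_def[abs_def])
qed

lemma lincomb_const: "lincomb M (\<lambda>v. r)"
proof -
  have "lincomb M (\<lambda>v. r * mnm (\<lambda>_. 0) v)" by (intro lincomb_scale lincomb_mnm) (auto simp: boxn_def)
  then show ?thesis by (simp add: mnm_def)
qed

lemma lincomb_pq_pow: "lincomb (2*n) (\<lambda>v. (pq u v)^n)"
proof (induction n)
  case 0 then show ?case using lincomb_const[of 0 1] by simp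
next
  case (Suc n)
  from lincomb_mult[OF lincomb_pq Suc] show ?case by simp
qed

lemma lincomb_taylor: "lincomb (2*k) (\<lambda>v. \<Sum>n<k. (pq u v)^n / fact n)"
proof -
  have "lincomb (2*k) (\<lambda>v. \<Sum>n<k. (1 / fact n) * (pq u v)^n)"
    by (intro lincomb_sum lincomb_scale) (auto intro: lincomb_mono[OF _ lincomb_pq_pow])
  then show ?thesis by simp
qed



lemma exp_taylor_bound: fixes t :: real shows
  "\<bar>exp t - (\<Sum>n<k. t^n / fact n)\<bar> \<le> \<bar>t\<bar>^k / fact k * exp \<bar>t\<bar>"
proof -
  obtain s where s: "\<bar>s\<bar> \<le> \<bar>t\<bar>" "exp t = (\<Sum>m<k. (t ^ m) / fact m) + (exp s / fact k) * t ^ k"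
    using Maclaurin_exp_le[of t k] by blast
  have "\<bar>exp t - (\<Sum>n<k. t^n / fact n)\<bar> = exp s / fact k * \<bar>t\<bar>^k"
    using s(2) by (simp add: abs_mult power_abs)
  also have "\<dots> \<le> exp \<bar>t\<bar> / fact k * \<bar>t\<bar>^k"
    using s(1) by (intro mult_right_mono divide_right_mono) auto
  finally show ?thesis by (simp add: mult.commute)
qed

lemma pow_fact_le_exp: "0 \<le> x \<Longrightarrow> x^k / fact k \<le> exp (x::real)"
proof -
  assume x: "0 \<le> x"
  obtain s where s: "\<bar>s\<bar> \<le> \<bar>x\<bar>" "exp x = (\<Sum>m<Suc k. (x ^ m) / fact m) + (exp s / fact (Suc k)) * x ^ Suc k"
    using Maclaurin_exp_le[of x "Suc k"] by blast
  have "x^k / fact k \<le> (\<Sum>m<Suc k. (x ^ m) / fact m)"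
    by (rule member_le_sum[where f="\<lambda>m. x^m/fact m"]) (use x in auto)
  also have "\<dots> \<le> exp x" using s(2) x by simp
  finally show ?thesis .
qed

lemma norm_sq_vec: "(norm (v::real^'n))^2 = (\<Sum>i\<in>UNIV. (v$i)^2)"
  by (simp add: norm_vec_def L2_set_def sum_nonneg)

lemma norm_diff_sq_vec: "(norm (u - v::real^'n))^2 = (norm u)^2 - 2 * (\<Sum>i\<in>UNIV. u$i * v$i) + (norm v)^2"
  by (simp add: norm_sq_vec power2_diff sum_subtractf sum.distrib sum_distrib_left mult_ac)

lemma pq_eq: fixes u v :: "real^'n" shows "(norm (u - v))^2 / 2 = (norm u)^2/2 - pq u v"
proof -
  have "pq u v = (\<Sum>i\<in>UNIV. u$i * v$i) - (\<Sum>i\<in>UNIV. (v$i)^2)/2"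
    by (simp add: pq_def sum_subtractf sum_divide_distrib)
  then show ?thesis unfolding norm_diff_sq_vec by (simp add: norm_sq_vec field_simps)
qed

lemma norm_le_half_card:
  assumes "\<forall>i. \<bar>v$i\<bar> \<le> 1/2"
  shows "norm (v::real^'n) \<le> real CARD('n) / 2"
proof -
  have "norm v \<le> (\<Sum>i\<in>UNIV. \<bar>v$i\<bar>)" by (rule norm_le_l1_cart)
  also have "\<dots> \<le> (\<Sum>i\<in>(UNIV::'n set). 1/2)" using assms by (intro sum_mono) auto
  finally show ?thesis by simp
qed

lemma abs_pq_le:
  assumes "\<forall>i. \<bar>v$i\<bar> \<le> 1/2"
  shows "\<bar>pq u (v::real^'n)\<bar> \<le> real CARD('n) * (norm u + 1)"
proof -
  have "\<bar>pq u v\<bar> \<le> (\<Sum>i\<in>UNIV. \<bar>u$i * v$i - (v$i)^2/2\<bar>)" unfolding pq_def by (rule sum_abs)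
  also have "\<dots> \<le> (\<Sum>i\<in>(UNIV::'n set). norm u + 1)"
  proof (intro sum_mono)
    fix i
    have ui: "\<bar>u$i\<bar> \<le> norm u" by (rule component_le_norm_cart)
    have vi: "\<bar>v$i\<bar> \<le> 1/2" using assms by auto
    have "\<bar>u$i * v$i\<bar> \<le> norm u * 1" unfolding abs_mult using ui vi
      by (intro mult_mono) auto
    moreover have "(v$i)^2 \<le> 1" 
    proof -
      have "(v$i)^2 \<le> (1/2)^2" using vi abs_le_square_iff[of "v$i" "1/2"] by simp
      then show ?thesis by (simp add: power2_eq_square)
    qed
    ultimately show "\<bar>u$i * v$i - (v$i)^2/2\<bar> \<le> norm u + 1"
    proof -
      have "\<bar>u$i * v$i - (v$i)^2/2\<bar> \<le> \<bar>u$i * v$i\<bar> + \<bar>(v$i)^2/2\<bar>" by (rule abs_triangle_ineq4)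
      moreover have "\<bar>(v$i)^2/2\<bar> \<le> 1" using \<open>(v$i)^2 \<le> 1\<close> by simp
      ultimately show ?thesis using \<open>\<bar>u$i * v$i\<bar> \<le> norm u * 1\<close> by linarith
    qed
  qed
  finally show ?thesis by simp
qed



lemma s0_bound:
  fixes s0 L :: real and k :: nat
  assumes s0: "0 \<le> s0" "s0 \<le> 4 * d * L" and L: "L \<ge> 1" and d: "d \<ge> 1"
    and k: "real k \<ge> 4 * d * exp 2 * L"
  shows "s0^k / fact k \<le> exp (-L)"
proof -
  have e2': "exp (2::real) \<ge> 1" by simp
  have p1: "1 * 1 \<le> d * exp 2" by (rule mult_mono) (use d e2' in auto)
  have p2: "1 * 1 \<le> (4 * d * exp 2) * 1" using p1 by simp
  have LL0: "1 * L \<le> (4 * d * exp 2) * L" using p2 L by (intro mult_right_mono) auto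
  then have LL: "L \<le> 4 * d * exp 2 * L" by simp
  have kpos: "real k > 0" using k LL L by linarith
  have e2: "exp (2::real) \<ge> 1" by simp
  have "s0 / real k \<le> (4 * d * L) / (4 * d * exp 2 * L)"
    using s0 k kpos L d by (intro frac_le) auto
  also have "\<dots> = exp (-2)" using L d by (simp add: exp_minus field_simps)
  finally have q: "s0 / real k \<le> exp (-2)" .
  have "s0^k / fact k = (s0 / real k)^k * (real k ^ k / fact k)"
    using kpos by (simp add: power_divide)
  also have "\<dots> \<le> exp (-2) ^ k * exp (real k)"
    using q s0 kpos by (intro mult_mono power_mono pow_fact_le_exp) auto
  also have "\<dots> = exp (- real k)" by (simp add: exp_of_nat_mult[symmetric] exp_add[symmetric])
  also have "\<dots> \<le> exp (-L)"
  proof -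
    have "L \<le> 4 * d * exp 2 * L" using LL by simp
    then show ?thesis using k by simp
  qed
  finally show ?thesis .
qed

lemma cell_bound:
  fixes u :: "real^'n" and v :: "'z \<Rightarrow> real^'n" and w :: "'z \<Rightarrow> real"
  assumes Z: "finite Z"
    and vb: "\<forall>z\<in>Z. \<forall>i. \<bar>v z $ i\<bar> \<le> 1/2"
    and L: "L \<ge> 1"
    and k: "real k \<ge> 4 * real CARD('n) * exp 2 * L"
    and mom: "\<forall>a\<in>boxn (2*k). (\<Sum>z\<in>Z. w z * mnm a (v z)) = 0"
  shows "\<bar>\<Sum>z\<in>Z. w z * exp (-((norm (u - v z))^2)/2)\<bar>
     \<le> (\<Sum>z\<in>Z. \<bar>w z\<bar>) * exp ((real CARD('n))^2 + real CARD('n)) * exp (-L) * exp (-((norm u)^2)/8)"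
proof -
  define d where "d = real CARD('n)"
  define r where "r = norm u"
  have d1: "d \<ge> 1" by (simp add: d_def)
  have r0: "r \<ge> 0" by (simp add: r_def)
  have W0: "(\<Sum>z\<in>Z. \<bar>w z\<bar>) \<ge> 0" by (simp add: sum_nonneg)
  show ?thesis
  proof (cases "r^2 \<ge> 8 * L")
    case True
    have each: "exp (-((norm (u - v z))^2)/2) \<le> exp (d^2 + d) * exp (-L) * exp (-(r^2)/8)" if z: "z \<in> Z" for z
    proof -
      have nv: "norm (v z) \<le> d/2" unfolding d_def using vb z by (intro norm_le_half_card) auto
      have "r \<le> norm (u - v z) + norm (v z)" unfolding r_def using norm_triangle_sub[of u "v z"] by simp
      then have "r^2 \<le> (norm (u - v z) + norm (v z))^2" using r0 by (intro power_mono) auto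
      also have "\<dots> \<le> 2 * (norm (u - v z))^2 + 2 * (norm (v z))^2"
      proof -
        have "(norm (u - v z) + norm (v z))^2 + (norm (u - v z) - norm (v z))^2 = 2 * (norm (u - v z))^2 + 2 * (norm (v z))^2"
          by (simp add: power2_eq_square algebra_simps)
        then show ?thesis using zero_le_power2[of "norm (u - v z) - norm (v z)"] by linarith
      qed
      finally have r2: "r^2 \<le> 2 * (norm (u - v z))^2 + 2 * (norm (v z))^2" .
      have "(norm (v z))^2 \<le> (d/2)^2" using nv by (intro power_mono) auto
      then have B: "(norm (v z))^2 \<le> d^2/4" by (simp add: power_divide)
      have "-((norm (u - v z))^2)/2 \<le> d^2 + d + (-L) + (-(r^2)/8)"
        using r2 True d1 B zero_le_power2[of d] by linarith
      then have "exp (-((norm (u - v z))^2)/2) \<le> exp (d^2 + d + (-L) + (-(r^2)/8))" by (rule exp_mono)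
      also have "\<dots> = exp (d^2 + d) * exp (-L) * exp (-(r^2)/8)" by (simp only: exp_add)
      finally show ?thesis .
    qed
    have "\<bar>\<Sum>z\<in>Z. w z * exp (-((norm (u - v z))^2)/2)\<bar> \<le> (\<Sum>z\<in>Z. \<bar>w z\<bar> * exp (-((norm (u - v z))^2)/2))"
      by (rule order_trans[OF sum_abs]) (simp add: abs_mult)
    also have "\<dots> \<le> (\<Sum>z\<in>Z. \<bar>w z\<bar> * (exp (d^2 + d) * exp (-L) * exp (-(r^2)/8)))"
      using each by (intro sum_mono mult_left_mono) auto
    also have "\<dots> = (\<Sum>z\<in>Z. \<bar>w z\<bar>) * (exp (d^2 + d) * exp (-L) * exp (-(r^2)/8))"
      by (rule sum_distrib_right[symmetric])
    finally show ?thesis unfolding d_def r_def by (simp only: mult.assoc)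
  next
    case False
    define T where "T x = (\<Sum>n<k. x^n / fact n)" for x :: real
    define s0 where "s0 = d * (r + 1)"
    have r3: "r \<le> 3 * L"
    proof -
      have LL: "L \<le> L*L" using L mult_right_mono[of 1 L L] by simp
      have e9: "(3*L)^2 = 9*(L*L)" by (simp add: power2_eq_square)
      have "r^2 < 8*L" using False by simp
      then have "r^2 \<le> (3*L)^2" unfolding e9 using LL L by linarith
      moreover have "0 \<le> 3 * L" using L by simp
      ultimately show ?thesis by (rule power2_le_imp_le)
    qed
    have s0b1: "0 \<le> s0" unfolding s0_def using r0 d1 by simp
    have "d * (r + 1) \<le> d * (4 * L)" using r3 L d1 by (intro mult_left_mono) auto
    then have s0b: "0 \<le> s0" "s0 \<le> 4 * d * L" using s0b1 by (auto simp: s0_def)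
    have fk: "s0^k / fact k \<le> exp (-L)"
      using s0_bound[OF s0b L d1] k by (simp add: d_def)
    have ann: "(\<Sum>z\<in>Z. w z * T (pq u (v z))) = 0"
      unfolding T_def using lincomb_ann[OF Z mom lincomb_taylor[of k u]] by simp
    have eqe: "exp (-((norm (u - v z))^2)/2) = exp (-(r^2)/2) * exp (pq u (v z))" for z
    proof -
      have "-((norm (u - v z))^2)/2 = -(r^2)/2 + pq u (v z)" using pq_eq[of u "v z"] by (simp add: r_def)
      then show ?thesis by (simp add: exp_add[symmetric])
    qed
    have "(\<Sum>z\<in>Z. w z * exp (-((norm (u - v z))^2)/2))
        = exp (-(r^2)/2) * ((\<Sum>z\<in>Z. w z * exp (pq u (v z))) - (\<Sum>z\<in>Z. w z * T (pq u (v z))))"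
      using ann unfolding eqe by (simp add: sum_distrib_right mult_ac)
    also have "\<dots> = exp (-(r^2)/2) * (\<Sum>z\<in>Z. w z * (exp (pq u (v z)) - T (pq u (v z))))"
      by (simp add: sum_subtractf right_diff_distrib)
    finally have eq: "(\<Sum>z\<in>Z. w z * exp (-((norm (u - v z))^2)/2))
        = exp (-(r^2)/2) * (\<Sum>z\<in>Z. w z * (exp (pq u (v z)) - T (pq u (v z))))" .
    have each: "\<bar>exp (pq u (v z)) - T (pq u (v z))\<bar> \<le> exp (-L) * exp s0" if z: "z \<in> Z" for z
    proof -
      have pb: "\<bar>pq u (v z)\<bar> \<le> s0" unfolding s0_def d_def r_def using vb z by (intro abs_pq_le) auto
      have "\<bar>exp (pq u (v z)) - T (pq u (v z))\<bar> \<le> \<bar>pq u (v z)\<bar>^k / fact k * exp \<bar>pq u (v z)\<bar>"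
        unfolding T_def by (rule exp_taylor_bound)
      also have "\<dots> \<le> s0^k / fact k * exp s0"
        using pb by (intro mult_mono divide_right_mono power_mono) auto
      also have "\<dots> \<le> exp (-L) * exp s0" using fk by (intro mult_right_mono) auto
      finally show ?thesis .
    qed
    have "\<bar>\<Sum>z\<in>Z. w z * (exp (pq u (v z)) - T (pq u (v z)))\<bar> \<le> (\<Sum>z\<in>Z. \<bar>w z\<bar> * (exp (-L) * exp s0))"
      by (rule order_trans[OF sum_abs]) (auto simp: abs_mult intro!: sum_mono mult_left_mono each)
    also have "\<dots> = (\<Sum>z\<in>Z. \<bar>w z\<bar>) * exp (-L) * exp s0"
      by (simp add: sum_distrib_right mult.assoc)
    finally have B: "\<bar>\<Sum>z\<in>Z. w z * (exp (pq u (v z)) - T (pq u (v z)))\<bar> \<le> (\<Sum>z\<in>Z. \<bar>w z\<bar>) * exp (-L) * exp s0" .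
    have "\<bar>\<Sum>z\<in>Z. w z * exp (-((norm (u - v z))^2)/2)\<bar> \<le> exp (-(r^2)/2) * ((\<Sum>z\<in>Z. \<bar>w z\<bar>) * exp (-L) * exp s0)"
      unfolding eq abs_mult using B by (simp add: mult_left_mono)
    also have "\<dots> = (\<Sum>z\<in>Z. \<bar>w z\<bar>) * exp (-L) * exp (-(r^2)/2 + s0)"
      by (simp only: exp_add mult.assoc mult.commute mult.left_commute)
    also have "\<dots> \<le> (\<Sum>z\<in>Z. \<bar>w z\<bar>) * exp (-L) * exp (d^2 + d + (-(r^2)/8))"
    proof -
      have "(r/2 - d)^2 = r^2/4 - d*r + d^2" by (simp add: power2_eq_square field_simps)
      then have dr: "d * r \<le> r^2/4 + d^2" using zero_le_power2[of "r/2 - d"] by linarith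
      have "s0 = d*r + d" by (simp add: s0_def algebra_simps)
      then have "-(r^2)/2 + s0 \<le> d^2 + d + (-(r^2)/8)" using dr zero_le_power2[of r] by linarith
      then show ?thesis using W0 by (intro mult_left_mono) auto
    qed
    also have "\<dots> = (\<Sum>z\<in>Z. \<bar>w z\<bar>) * exp (d^2 + d) * exp (-L) * exp (-(r^2)/8)"
      by (simp only: exp_add mult.assoc mult.commute mult.left_commute)
    finally show ?thesis unfolding d_def r_def .
  qed
qed



lemma gauss_nonneg: "0 \<le> gauss_dens s y"
  by (simp add: gauss_dens_def)

lemma gauss_meas[measurable]: "gauss_dens s \<in> borel_measurable borel"
  unfolding gauss_dens_def[abs_def] by measurable

lemma powr_neg_half: "A > 0 \<Longrightarrow> A powr (- real n / 2) = (1 / sqrt A)^n"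
proof -
  assume A: "A > 0"
  have "A powr (- real n / 2) = (A powr (1/2)) powr (- real n)" by (simp add: powr_powr)
  also have "\<dots> = inverse ((A powr (1/2)) powr real n)" by (rule powr_minus)
  also have "\<dots> = inverse (sqrt A ^ n)" using A by (simp add: powr_half_sqrt powr_realpow)
  also have "\<dots> = (1 / sqrt A)^n" by (simp add: power_one_over inverse_eq_divide)
  finally show ?thesis .
qed
lemma card_Basis_vec: "card (Basis :: (real^'n) set) = CARD('n)"
  using DIM_cart[where 'a=real and 'b='n] by simp

lemma gauss_prod:
  fixes x c :: "real^'n"
  assumes s: "s > 0"
  shows "gauss_dens s (x - c) = (\<Prod>b\<in>Basis. normal_density (c \<bullet> b) s (x \<bullet> b))"
proof -
  have A: "2 * pi * s\<^sup>2 > 0" using s by simp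
  have n2: "(norm (x - c))^2 = (\<Sum>b\<in>Basis. ((x - c) \<bullet> b)^2)"
    unfolding power2_norm_eq_inner by (subst euclidean_inner) (simp add: power2_eq_square)
  have "(\<Prod>b\<in>(Basis::(real^'n) set). normal_density (c \<bullet> b) s (x \<bullet> b))
      = (\<Prod>b\<in>(Basis::(real^'n) set). 1 / sqrt (2 * pi * s\<^sup>2)) * (\<Prod>b\<in>(Basis::(real^'n) set). exp (-((x \<bullet> b - c \<bullet> b)\<^sup>2) / (2 * s\<^sup>2)))"
    unfolding normal_density_def prod.distrib by simp
  also have "(\<Prod>b\<in>(Basis::(real^'n) set). exp (-((x \<bullet> b - c \<bullet> b)\<^sup>2) / (2 * s\<^sup>2)))
      = exp (\<Sum>b\<in>(Basis::(real^'n) set). -((x \<bullet> b - c \<bullet> b)\<^sup>2) / (2 * s\<^sup>2))"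
    by (subst exp_sum) auto
  also have "(\<Sum>b\<in>(Basis::(real^'n) set). -((x \<bullet> b - c \<bullet> b)\<^sup>2) / (2 * s\<^sup>2)) = - (norm (x - c))\<^sup>2 / (2 * s\<^sup>2)"
    unfolding n2 by (simp add: sum_divide_distrib sum_negf inner_diff_left)
  also have "(\<Prod>b\<in>(Basis::(real^'n) set). 1 / sqrt (2 * pi * s\<^sup>2)) = (2 * pi * s\<^sup>2) powr (- real CARD('n) / 2)"
    using powr_neg_half[OF A, of "CARD('n)"] by (simp add: card_Basis_vec)
  finally show ?thesis by (simp add: gauss_dens_def)
qed

lemma nn_integral_normal: "s > 0 \<Longrightarrow> (\<integral>\<^sup>+x. ennreal (normal_density m s x) \<partial>lborel) = 1"
  by (subst nn_integral_eq_integral) (auto simp: normal_density_nonneg)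

lemma gauss_int:
  fixes c :: "real^'n"
  assumes s: "s > 0"
  shows "(\<integral>\<^sup>+x. ennreal (gauss_dens s (x - c)) \<partial>lborel) = 1"
proof -
  have "(\<integral>\<^sup>+x. ennreal (gauss_dens s (x - c)) \<partial>lborel)
      = (\<integral>\<^sup>+x. (\<Prod>b\<in>Basis. ennreal (normal_density (c \<bullet> b) s (x \<bullet> b))) \<partial>lborel)"
    using s by (simp add: gauss_prod prod_ennreal normal_density_nonneg)
  also have "\<dots> = (\<Prod>b\<in>(Basis::(real^'n) set). (\<integral>\<^sup>+x. ennreal (normal_density (c \<bullet> b) s x) \<partial>lborel))"
    by (rule nn_integral_lborel_prod) auto
  also have "\<dots> = 1" using s by (simp add: nn_integral_normal)
  finally show ?thesis .
qed

lemma gauss_scale2: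
  fixes y :: "real^'n"
  assumes s: "s > 0"
  shows "(2 * pi * s\<^sup>2) powr (- real CARD('n) / 2) * exp (- (norm y)\<^sup>2 / (8 * s\<^sup>2))
       = 2 ^ CARD('n) * gauss_dens (2 * s) y"
proof -
  have eq: "(2 * pi * (2 * s)\<^sup>2) = 4 * (2 * pi * s\<^sup>2)" by (simp add: power2_eq_square)
  have "(2 * pi * (2 * s)\<^sup>2) powr (- real CARD('n) / 2) = 4 powr (- real CARD('n) / 2) * (2 * pi * s\<^sup>2) powr (- real CARD('n) / 2)"
    unfolding eq by (rule powr_mult)
  moreover have "(4::real) powr (- real CARD('n) / 2) = 1 / 2 ^ CARD('n)"
  proof -
    have "(4::real) powr (- real CARD('n) / 2) = ((2::real) powr 2) powr (- real CARD('n) / 2)" by simp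
    also have "\<dots> = 2 powr (- real CARD('n))" by (subst powr_powr) simp
    also have "\<dots> = inverse (2 powr real CARD('n))" by (rule powr_minus)
    finally show ?thesis by (simp add: powr_realpow inverse_eq_divide)
  qed
  moreover have "- (norm y)\<^sup>2 / (2 * (2 * s)\<^sup>2) = - (norm y)\<^sup>2 / (8 * s\<^sup>2)" by (simp add: power2_eq_square)
  ultimately show ?thesis by (simp add: gauss_dens_def)
qed

lemma gauss_le:
  assumes s: "s > 0"
  shows "gauss_dens s (y::real^'n) \<le> 1 / s ^ CARD('n)"
proof -
  have m: "(2 * pi * s\<^sup>2) powr (- real CARD('n) / 2) = (2 * pi) powr (- real CARD('n) / 2) * (s\<^sup>2) powr (- real CARD('n) / 2)"
    by (rule powr_mult)
  have p1: "(2 * pi) powr (- real CARD('n) / 2) \<le> 1"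
  proof -
    have "1 \<le> (2 * pi) powr (real CARD('n) / 2)" using pi_gt3 by (intro ge_one_powr_ge_zero) auto
    moreover have "(2 * pi) powr (- real CARD('n) / 2) = 1 / (2 * pi) powr (real CARD('n) / 2)"
      using powr_minus_divide[of "2*pi" "real CARD('n) / 2"] by simp
    ultimately show ?thesis by simp
  qed
  have p2: "(s\<^sup>2) powr (- real CARD('n) / 2) = 1 / s ^ CARD('n)"
  proof -
    have "(s\<^sup>2) powr (- real CARD('n) / 2) = (s powr 2) powr (- real CARD('n) / 2)" using s by (simp add: powr_realpow)
    also have "\<dots> = s powr (- real CARD('n))" by (simp add: powr_powr)
    also have "\<dots> = inverse (s powr real CARD('n))" by (rule powr_minus)
    finally show ?thesis using s by (simp add: powr_realpow inverse_eq_divide)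
  qed
  have P: "(2 * pi * s\<^sup>2) powr (- real CARD('n) / 2) \<le> 1 / s ^ CARD('n)"
    unfolding m p2 using p1 mult_right_mono[OF p1, of "1 / s ^ CARD('n)"] s by simp
  have "gauss_dens s y \<le> (2 * pi * s\<^sup>2) powr (- real CARD('n) / 2) * 1"
    unfolding gauss_dens_def by (intro mult_left_mono) auto
  then show ?thesis using P by simp
qed



definition rnd :: "real \<Rightarrow> int \<Rightarrow> real \<Rightarrow> int" where
  "rnd h N t = max (-(N-1)) (min (N-1) \<lfloor>t/h\<rfloor>)"

definition gq :: "real \<Rightarrow> int \<Rightarrow> real^'n \<Rightarrow> real^'n" where
  "gq h N z = (\<chi> i. real_of_int (rnd h N (z$i)) * h)"

definition Sg :: "real \<Rightarrow> int \<Rightarrow> (real^'n) set" where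
  "Sg h N = (\<lambda>n. \<chi> i. real_of_int (n i) * h) ` {n :: 'n \<Rightarrow> int. \<forall>i. \<bar>n i\<bar> < N}"

lemma rnd_bound: "N \<ge> 1 \<Longrightarrow> \<bar>rnd h N t\<bar> < N"
  by (auto simp: rnd_def)

lemma rnd_err:
  assumes h: "h > 0" and N: "N = \<lceil>a/h\<rceil>" and t: "\<bar>t\<bar> \<le> a" and a: "a > 0"
  shows "\<bar>t - real_of_int (rnd h N t) * h\<bar> \<le> h"
proof -
  have "a / h > 0" using a h by simp
  then have Npos: "N \<ge> 1" unfolding N by linarith
  define f where "f = \<lfloor>t/h\<rfloor>"
  have f1: "real_of_int f \<le> t/h" "t/h < real_of_int f + 1" unfolding f_def by linarith+
  have f1': "real_of_int f * h \<le> t" "t < (real_of_int f + 1) * h"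
    using f1 h by (simp_all add: field_simps)
  have N1: "a/h \<le> real_of_int N" "real_of_int N < a/h + 1" unfolding N by linarith+
  have N1': "a \<le> real_of_int N * h" "(real_of_int N - 1) * h < a"
    using N1 h by (simp_all add: field_simps)
  show ?thesis
  proof (cases "f > N - 1")
    case True
    then have r: "rnd h N t = N - 1" using Npos by (simp add: rnd_def f_def)
    have "real_of_int f \<ge> real_of_int N" using True by linarith
    then have p: "real_of_int f * h \<ge> real_of_int N * h" using h by (intro mult_right_mono) auto
    have e: "t - real_of_int (N - 1) * h = t - real_of_int N * h + h" by (simp add: algebra_simps)
    show ?thesis unfolding r e abs_le_iff using p f1' N1' t h by (simp only: abs_le_iff) linarith
  next
    case False
    show ?thesis
    proof (cases "f < -(N - 1)")
      case True
      then have r: "rnd h N t = -(N - 1)" using Npos by (simp add: rnd_def f_def)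
      have "real_of_int f + 1 \<le> - (real_of_int N - 1)" using True by linarith
      then have p: "(real_of_int f + 1) * h \<le> - (real_of_int N - 1) * h" using h by (intro mult_right_mono) auto
      have e: "t - real_of_int (-(N - 1)) * h = t + real_of_int N * h - h" by (simp add: algebra_simps)
      have e2: "- (real_of_int N - 1) * h = h - real_of_int N * h" by (simp add: algebra_simps)
      show ?thesis unfolding r e abs_le_iff using p f1' N1' t h unfolding e2 by (simp only: abs_le_iff) linarith
    next
      case False2: False
      then have r: "rnd h N t = f" using False by (simp add: rnd_def f_def)
      show ?thesis unfolding r using f1' h by (simp add: algebra_simps abs_le_iff)
    qed
  qed
qed

lemma finite_Sg: "finite (Sg h N :: (real^'n) set)"
proof -
  have ii: "(\<bar>x\<bar> < N) = (x \<in> {-(N-1)..N-1})" for x :: int by auto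
  have "{n :: 'n \<Rightarrow> int. \<forall>i. \<bar>n i\<bar> < N} = PiE UNIV (\<lambda>_. {-(N-1)..N-1})"
    unfolding PiE_UNIV_domain ii by (auto simp: Pi_def)
  moreover have "finite (PiE (UNIV::'n set) (\<lambda>_. {-(N-1)..N-1}))" by (rule finite_PiE) auto
  ultimately have "finite {n :: 'n \<Rightarrow> int. \<forall>i. \<bar>n i\<bar> < N}" by simp
  then show ?thesis unfolding Sg_def by (rule finite_imageI)
qed

lemma gq_in_Sg: "N \<ge> 1 \<Longrightarrow> gq h N z \<in> Sg h N"
  unfolding Sg_def gq_def by (rule image_eqI[where x="\<lambda>i. rnd h N (z$i)"]) (auto simp: rnd_bound)

lemma Sg_grid: "Sg (\<sigma> * \<epsilon>) \<lceil>a / (\<sigma> * \<epsilon>)\<rceil> \<subseteq> grid a \<sigma> \<epsilon>"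
  unfolding Sg_def grid_def by (auto simp: mult.assoc)

lemma Sg_cube:
  assumes h: "h > 0" and N: "N = \<lceil>a/h\<rceil>"
  shows "Sg h N \<subseteq> cube a"
proof
  fix x assume "x \<in> Sg h N"
  then obtain n where n: "\<forall>i. \<bar>n i\<bar> < N" "x = (\<chi> i. real_of_int (n i) * h)" unfolding Sg_def by blast
  have N1: "(real_of_int N - 1) * h < a"
  proof -
    have "real_of_int N < a/h + 1" unfolding N by linarith
    then show ?thesis using h by (simp add: field_simps)
  qed
  have "\<bar>x$i\<bar> \<le> a" for i
  proof -
    have "\<bar>real_of_int (n i)\<bar> \<le> real_of_int N - 1" using n(1)[rule_format, of i] by linarith
    then have p: "\<bar>real_of_int (n i)\<bar> * h \<le> (real_of_int N - 1) * h" using h by (intro mult_right_mono) auto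
    have "\<bar>x$i\<bar> = \<bar>real_of_int (n i)\<bar> * h" using n(2) h by (simp add: abs_mult)
    then show ?thesis using p N1 by linarith
  qed
  then show "x \<in> cube a" by (simp add: cube_def)
qed

lemma gq_err:
  assumes h: "h > 0" and N: "N = \<lceil>a/h\<rceil>" and z: "z \<in> cube a" and a: "a > 0"
  shows "\<bar>(z - gq h N z) $ i\<bar> \<le> h"
  using rnd_err[OF h N, of "z$i"] z a by (simp add: gq_def cube_def)

lemma rnd_meas: "(\<lambda>z::real^'n. real_of_int (rnd h N (z$i)) * h) \<in> borel_measurable borel"
proof -
  have "(\<lambda>z::real^'n. rnd h N (z$i)) \<in> measurable borel (count_space UNIV)"
    unfolding rnd_def by measurable
  then show ?thesis by measurable
qed

lemma gq_meas: "gq h N \<in> borel_measurable (borel :: (real^'n) measure)"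
proof (subst borel_measurable_euclidean_space, intro ballI)
  fix b :: "real^'n" assume "b \<in> Basis"
  then obtain i where b: "b = axis i 1" by (auto simp: Basis_vec_def)
  have "(\<lambda>x. gq h N x \<bullet> b) = (\<lambda>z. real_of_int (rnd h N (z$i)) * h)"
    by (simp add: b inner_axis gq_def)
  then show "(\<lambda>x. gq h N x \<bullet> b) \<in> borel_measurable borel" using rnd_meas by simp
qed



lemma exp_diff_bound:
  fixes A B :: real
  shows "\<bar>exp (-A) - exp (-B)\<bar> \<le> \<bar>A - B\<bar> * exp (- min A B)"
proof -
  have key: "exp (-A) - exp (-B) \<le> (B - A) * exp (-A)" if "A \<le> B" for A B :: real
  proof -
    have "exp (A - B) \<ge> 1 - (B - A)" using exp_ge_add_one_self[of "A - B"] by linarith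
    then have "1 - exp (-(B - A)) \<le> B - A" by simp
    then have "exp (-A) * (1 - exp (-(B - A))) \<le> exp (-A) * (B - A)" by (intro mult_left_mono) auto
    moreover have "exp (-A) * (1 - exp (-(B - A))) = exp (-A) - exp (-B)"
      by (simp add: right_diff_distrib exp_add[symmetric])
    ultimately show ?thesis by (metis mult.commute)
  qed
  show ?thesis
  proof (cases "A \<le> B")
    case True
    then have "exp (-B) \<le> exp (-A)" by simp
    then show ?thesis using key[OF True] True by (simp add: min_def)
  next
    case False
    then have "exp (-A) \<le> exp (-B)" by simp
    then show ?thesis using key[of B A] False by (simp add: min_def abs_minus_commute)
  qed
qed

lemma t_exp_bound: fixes t :: real shows "t * exp (- (t^2) / 8) \<le> 2"
proof -
  have "1 + t^2/8 \<le> exp (t^2/8)" using exp_ge_add_one_self[of "t^2/8"] by simp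
  moreover have "t \<le> 2 * (1 + t^2/8)"
  proof -
    have "0 \<le> (t - 2)^2" by simp
    then show ?thesis by (simp add: power2_eq_square algebra_simps)
  qed
  moreover have "2 * (1 + t^2/8) \<le> 2 * exp (t^2/8)" by (intro mult_left_mono) (use calculation(1) in auto)
  ultimately have "t \<le> 2 * exp (t^2/8)" by (meson order_trans)
  then have "t * exp (- (t^2)/8) \<le> 2 * exp (t^2/8) * exp (- (t^2)/8)" by (intro mult_right_mono) auto
  also have "\<dots> = 2" by (simp add: exp_add[symmetric])
  finally show ?thesis .
qed

lemma shift_bound:
  fixes y \<delta> :: "real^'n"
  assumes e: "norm \<delta> \<le> real CARD('n) * \<epsilon>" and eps: "0 \<le> \<epsilon>" "\<epsilon> \<le> 1"
  shows "\<bar>exp (- ((norm y)^2) / 2) - exp (- ((norm (y + \<delta>))^2) / 2)\<bar>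
    \<le> real CARD('n) * (2 + real CARD('n) / 2) * exp ((real CARD('n))^2 / 2) * \<epsilon> * exp (- ((norm y)^2) / 8)"
proof -
  define d where "d = real CARD('n)"
  define t where "t = norm y"
  define s where "s = norm (y + \<delta>)"
  define E where "E = norm \<delta>"
  have d1: "d \<ge> 1" by (simp add: d_def)
  have t0: "t \<ge> 0" "s \<ge> 0" "E \<ge> 0" by (auto simp: t_def s_def E_def)
  have Ed: "E \<le> d * \<epsilon>" using e by (simp add: E_def d_def)
  have "d * \<epsilon> \<le> d * 1" using d1 eps by (intro mult_left_mono) auto
  then have Ed1: "E \<le> d" using Ed by simp
  have st: "\<bar>s - t\<bar> \<le> E" unfolding s_def t_def E_def
    using norm_triangle_ineq[of y \<delta>] norm_triangle_ineq[of "y + \<delta>" "-\<delta>"] by (simp add: abs_le_iff)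
  have e: "s^2/2 - t^2/2 = (s - t) * (s + t) / 2" by (simp add: power2_eq_square algebra_simps)
  have "\<bar>s^2/2 - t^2/2\<bar> = \<bar>(s - t) * (s + t) / 2\<bar>" by (simp only: e)
  also have "\<dots> = \<bar>s - t\<bar> * (s + t) / 2" using t0 by (simp add: abs_mult)
  finally have "\<bar>s^2/2 - t^2/2\<bar> = \<bar>s - t\<bar> * (s + t) / 2" .
  also have "\<dots> \<le> E * (2 * t + E) / 2"
  proof -
    have "s + t \<le> 2 * t + E" using st by (simp add: abs_le_iff)
    then have "\<bar>s - t\<bar> * (s + t) \<le> E * (2 * t + E)" using st t0 by (intro mult_mono) auto
    then show ?thesis by simp
  qed
  finally have AB: "\<bar>t^2/2 - s^2/2\<bar> \<le> E * (2 * t + E) / 2" by (simp add: abs_minus_commute)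
  have mn: "min (t^2/2) (s^2/2) \<ge> t^2/4 - E^2/2"
  proof -
    have "t \<le> s + E" using st by (simp add: abs_le_iff)
    then have "t^2 \<le> (s + E)^2" using t0 by (intro power_mono) auto
    also have "\<dots> \<le> 2 * s^2 + 2 * E^2"
    proof -
      have "(s + E)^2 + (s - E)^2 = 2 * s^2 + 2 * E^2" by (simp add: power2_eq_square algebra_simps)
      then show ?thesis using zero_le_power2[of "s - E"] by linarith
    qed
    finally have h: "t^2 \<le> 2 * s^2 + 2 * E^2" .
    have m1: "t^2/4 - E^2/2 \<le> t^2/2" using zero_le_power2[of E] zero_le_power2[of t] by linarith
    have m2: "t^2/4 - E^2/2 \<le> s^2/2" using h by linarith
    show ?thesis using min.boundedI[OF m1 m2] by simp
  qed
  have "\<bar>exp (- (t^2/2)) - exp (- (s^2/2))\<bar> \<le> \<bar>t^2/2 - s^2/2\<bar> * exp (- min (t^2/2) (s^2/2))"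
    by (rule exp_diff_bound)
  also have "\<dots> \<le> (E * (2 * t + E) / 2) * exp (- (t^2/4 - E^2/2))"
    using AB mn t0 by (intro mult_mono) auto
  also have "\<dots> \<le> (d * \<epsilon> * (2 * t + d) / 2) * exp (- (t^2/4) + d^2/2)"
  proof (intro mult_mono)
    show "E * (2 * t + E) / 2 \<le> d * \<epsilon> * (2 * t + d) / 2"
      using Ed Ed1 t0 by (intro divide_right_mono mult_mono) auto
    have "E^2 \<le> d^2" using Ed1 t0 by (intro power_mono) auto
    then show "exp (- (t^2/4 - E^2/2)) \<le> exp (- (t^2/4) + d^2/2)" by simp
  qed (use t0 d1 eps in auto)
  also have "\<dots> = d * \<epsilon> * exp (d^2/2) * ((t + d/2) * exp (- (t^2)/4))"
  proof -
    have ee: "exp (- (t^2/4) + d^2/2) = exp (d^2/2) * exp (- (t^2)/4)" by (subst exp_add[symmetric]) simp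
    show ?thesis unfolding ee by (simp add: algebra_simps)
  qed
  also have "\<dots> \<le> d * \<epsilon> * exp (d^2/2) * ((2 + d/2) * exp (- (t^2)/8))"
  proof (intro mult_left_mono)
    have e48: "exp (- (t^2)/4) = exp (- (t^2)/8) * exp (- (t^2)/8)" by (simp add: exp_add[symmetric])
    have l1: "t * exp (- (t^2)/4) \<le> 2 * exp (- (t^2)/8)"
      unfolding e48 using t_exp_bound[of t] by (simp add: mult.assoc[symmetric] mult_right_mono)
    have l2: "d/2 * exp (- (t^2)/4) \<le> d/2 * exp (- (t^2)/8)" using d1 by (intro mult_left_mono) auto
    show "(t + d/2) * exp (- (t^2)/4) \<le> (2 + d/2) * exp (- (t^2)/8)"
      using l1 l2 by (simp add: algebra_simps)
  qed (use d1 eps in auto)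
  finally show ?thesis by (simp add: d_def t_def s_def mult_ac)
qed



lemma norm_scale_inv: "s > 0 \<Longrightarrow> norm ((1/s) *\<^sub>R w) = norm w / s"
  by simp

lemma gauss_as_exp:
  assumes s: "s > 0"
  shows "gauss_dens s w = (2 * pi * s\<^sup>2) powr (- real CARD('n) / 2) * exp (- ((norm ((1/s) *\<^sub>R (w::real^'n)))^2) / 2)"
  using s by (simp add: gauss_dens_def power_divide)

lemma gauss_env:
  assumes s: "s > 0"
  shows "(2 * pi * s\<^sup>2) powr (- real CARD('n) / 2) * exp (- ((norm ((1/s) *\<^sub>R (w::real^'n)))^2) / 8)
       = 2 ^ CARD('n) * gauss_dens (2 * s) w"
proof -
  have e: "- ((norm ((1/s) *\<^sub>R (w::real^'n)))^2) / 8 = - (norm w)\<^sup>2 / (8 * s\<^sup>2)"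
    using s by (simp add: power_divide)
  show ?thesis unfolding e by (rule gauss_scale2[OF s])
qed

lemma gauss_shift:
  fixes x z z' :: "real^'n"
  assumes s: "s > 0" and eps: "0 \<le> \<epsilon>" "\<epsilon> \<le> 1"
    and zz: "\<forall>i. \<bar>(z - z') $ i\<bar> \<le> s * \<epsilon>"
  shows "\<bar>gauss_dens s (x - z) - gauss_dens s (x - z')\<bar>
    \<le> real CARD('n) * (2 + real CARD('n) / 2) * exp ((real CARD('n))^2 / 2) * \<epsilon> * 2 ^ CARD('n) * gauss_dens (2 * s) (x - z)"
proof -
  define P where "P = (2 * pi * s\<^sup>2) powr (- real CARD('n) / 2)"
  define K1 where "K1 = real CARD('n) * (2 + real CARD('n) / 2) * exp ((real CARD('n))^2 / 2)"
  define y where "y = (1/s) *\<^sub>R (x - z)"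
  define \<delta> where "\<delta> = (1/s) *\<^sub>R (z - z')"
  have yd: "(1/s) *\<^sub>R (x - z') = y + \<delta>" by (simp add: y_def \<delta>_def algebra_simps)
  have nd: "norm \<delta> \<le> real CARD('n) * \<epsilon>"
  proof -
    have "norm \<delta> \<le> (\<Sum>i\<in>UNIV. \<bar>\<delta>$i\<bar>)" by (rule norm_le_l1_cart)
    also have "\<dots> \<le> (\<Sum>i\<in>(UNIV::'n set). \<epsilon>)"
    proof (intro sum_mono)
      fix i
      have "\<bar>\<delta>$i\<bar> = \<bar>(z - z')$i\<bar> / s" using s by (simp add: \<delta>_def abs_mult)
      also have "\<dots> \<le> s * \<epsilon> / s" using zz s by (intro divide_right_mono) auto
      finally show "\<bar>\<delta>$i\<bar> \<le> \<epsilon>" using s by simp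
    qed
    finally show ?thesis by simp
  qed
  have P0: "P \<ge> 0" by (simp add: P_def)
  have "\<bar>gauss_dens s (x - z) - gauss_dens s (x - z')\<bar>
      = P * \<bar>exp (- ((norm y)^2) / 2) - exp (- ((norm (y + \<delta>))^2) / 2)\<bar>"
    unfolding gauss_as_exp[OF s, of "x - z"] gauss_as_exp[OF s, of "x - z'"] yd
    by (simp add: P_def y_def abs_mult flip: right_diff_distrib)
  also have "\<dots> \<le> P * (K1 * \<epsilon> * exp (- ((norm y)^2) / 8))"
    using shift_bound[OF nd eps, of y] P0 by (intro mult_left_mono) (auto simp: K1_def)
  also have "\<dots> = K1 * \<epsilon> * (P * exp (- ((norm y)^2) / 8))" by (simp add: mult_ac)
  also have "P * exp (- ((norm y)^2) / 8) = 2 ^ CARD('n) * gauss_dens (2 * s) (x - z)"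
    unfolding P_def y_def by (rule gauss_env[OF s])
  finally show ?thesis by (simp add: K1_def mult_ac)
qed

lemma QF_bound:
  fixes S :: "(real^'n) set" and JB :: "('n \<Rightarrow> int) set"
  assumes S: "finite S" and JB: "finite JB"
    and JS: "\<forall>z\<in>S. Jf z \<in> JB"
    and vv: "\<forall>z. vv z = (1/s) *\<^sub>R (z - cen (Jf z))"
    and vb: "\<forall>z\<in>S. \<forall>i. \<bar>vv z $ i\<bar> \<le> 1/2"
    and mom: "\<forall>J\<in>JB. \<forall>a\<in>boxn (2*k). (\<Sum>z\<in>S. w z * (if Jf z = J then mnm a (vv z) else 0)) = 0"
    and L: "L \<ge> 1" and k: "real k \<ge> 4 * real CARD('n) * exp 2 * L" and s: "s > 0"
  shows "\<bar>\<Sum>z\<in>S. w z * gauss_dens s (x - z)\<bar>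
     \<le> (\<Sum>J\<in>JB. (\<Sum>z\<in>{z\<in>S. Jf z = J}. \<bar>w z\<bar>) * exp ((real CARD('n))^2 + real CARD('n)) * exp (-L)
            * (2 ^ CARD('n) * gauss_dens (2 * s) (x - cen J)))"
proof -
  define P where "P = (2 * pi * s\<^sup>2) powr (- real CARD('n) / 2)"
  have P0: "P \<ge> 0" by (simp add: P_def)
  have grp: "(\<Sum>z\<in>S. w z * gauss_dens s (x - z)) = (\<Sum>J\<in>JB. \<Sum>z\<in>{z\<in>S. Jf z = J}. w z * gauss_dens s (x - z))"
  proof -
    have im: "Jf ` S \<subseteq> JB" using JS by auto
    show ?thesis using sum.group[OF S JB im, of "\<lambda>z. w z * gauss_dens s (x - z)"] by simp
  qed
  have cell: "\<bar>\<Sum>z\<in>{z\<in>S. Jf z = J}. w z * gauss_dens s (x - z)\<bar>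
     \<le> (\<Sum>z\<in>{z\<in>S. Jf z = J}. \<bar>w z\<bar>) * exp ((real CARD('n))^2 + real CARD('n)) * exp (-L)
            * (2 ^ CARD('n) * gauss_dens (2 * s) (x - cen J))" if J: "J \<in> JB" for J
  proof -
    define Z where "Z = {z\<in>S. Jf z = J}"
    define u where "u = (1/s) *\<^sub>R (x - cen J)"
    have Zf: "finite Z" using S by (simp add: Z_def)
    have eqz: "(1/s) *\<^sub>R (x - z) = u - vv z" if "z \<in> Z" for z
    proof -
      have jz: "Jf z = J" using that by (simp add: Z_def)
      show ?thesis unfolding u_def vv[rule_format, of z] jz by (simp add: algebra_simps)
    qed
    have momZ: "\<forall>a\<in>boxn (2*k). (\<Sum>z\<in>Z. w z * mnm a (vv z)) = 0"
    proof
      fix a :: "'n \<Rightarrow> nat" assume a: "a \<in> boxn (2*k)"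
      have "(\<Sum>z\<in>Z. w z * mnm a (vv z)) = (\<Sum>z\<in>S. w z * (if Jf z = J then mnm a (vv z) else 0))"
        unfolding Z_def using S by (simp add: sum.inter_filter[symmetric] if_distrib cong: if_cong)
      then show "(\<Sum>z\<in>Z. w z * mnm a (vv z)) = 0" using mom J a by simp
    qed
    have vbZ: "\<forall>z\<in>Z. \<forall>i. \<bar>vv z $ i\<bar> \<le> 1/2" using vb by (simp add: Z_def)
    have "(\<Sum>z\<in>Z. w z * gauss_dens s (x - z)) = P * (\<Sum>z\<in>Z. w z * exp (- ((norm (u - vv z))^2) / 2))"
      unfolding sum_distrib_left
      by (intro sum.cong refl) (simp add: gauss_as_exp[OF s] eqz P_def mult_ac)
    then have "\<bar>\<Sum>z\<in>Z. w z * gauss_dens s (x - z)\<bar> = P * \<bar>\<Sum>z\<in>Z. w z * exp (- ((norm (u - vv z))^2) / 2)\<bar>"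
      using P0 by (simp add: abs_mult)
    also have "\<dots> \<le> P * ((\<Sum>z\<in>Z. \<bar>w z\<bar>) * exp ((real CARD('n))^2 + real CARD('n)) * exp (-L) * exp (- ((norm u)^2) / 8))"
      using cell_bound[OF Zf vbZ L k momZ, of u] P0 by (intro mult_left_mono) auto
    also have "\<dots> = (\<Sum>z\<in>Z. \<bar>w z\<bar>) * exp ((real CARD('n))^2 + real CARD('n)) * exp (-L) * (P * exp (- ((norm u)^2) / 8))"
      by (simp add: mult_ac)
    also have "P * exp (- ((norm u)^2) / 8) = 2 ^ CARD('n) * gauss_dens (2 * s) (x - cen J)"
      unfolding P_def u_def by (rule gauss_env[OF s])
    finally show ?thesis by (simp add: Z_def)
  qed
  show ?thesis unfolding grp
    by (rule order_trans[OF sum_abs]) (intro sum_mono cell)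
qed



lemma P0_meas:
  assumes "sets P0 = sets borel" "f \<in> borel_measurable borel"
  shows "f \<in> borel_measurable P0"
  using assms(2) by (simp add: measurable_cong_sets[OF assms(1) refl])

lemma P0_space: "sets P0 = sets (borel::'a::topological_space measure) \<Longrightarrow> space P0 = UNIV"
  by (metis sets_eq_imp_space_eq space_borel)

lemma int_bounded:
  fixes f :: "'a::topological_space \<Rightarrow> real"
  assumes P: "prob_space P0" and s: "sets P0 = sets borel" and m: "f \<in> borel_measurable borel"
    and b: "\<And>z. \<bar>f z\<bar> \<le> B"
  shows "integrable P0 f"
proof -
  interpret prob_space P0 by fact
  show ?thesis by (rule integrable_const_bound[where B=B]) (use b P0_meas[OF s m] in auto)
qed

lemma int_gauss:
  fixes x :: "real^'n"
  assumes P: "prob_space P0" and s: "sets P0 = sets borel" and sg: "\<sigma> > 0"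
  shows "integrable P0 (\<lambda>z. gauss_dens \<sigma> (x - z))"
proof (rule int_bounded[OF P s, where B="1 / \<sigma> ^ CARD('n)"])
  fix z show "\<bar>gauss_dens \<sigma> (x - z)\<bar> \<le> 1 / \<sigma> ^ CARD('n)"
    using gauss_le[OF sg, of "x - z"] gauss_nonneg[of \<sigma> "x - z"] by simp
qed simp

lemma int_gauss_gq:
  fixes x :: "real^'n"
  assumes P: "prob_space P0" and s: "sets P0 = sets borel" and sg: "\<sigma> > 0"
  shows "integrable P0 (\<lambda>z. gauss_dens \<sigma> (x - gq h N z))"
proof (rule int_bounded[OF P s, where B="1 / \<sigma> ^ CARD('n)"])
  show "(\<lambda>z. gauss_dens \<sigma> (x - gq h N z)) \<in> borel_measurable borel"
    using gq_meas[of h N] by measurable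
next
  fix z show "\<bar>gauss_dens \<sigma> (x - gq h N z)\<bar> \<le> 1 / \<sigma> ^ CARD('n)"
    using gauss_le[OF sg, of "x - gq h N z"] gauss_nonneg[of \<sigma> "x - gq h N z"] by simp
qed

lemma Q_integral:
  fixes f :: "real^'n \<Rightarrow> real"
  assumes P: "prob_space P0" and s: "sets P0 = sets borel" and N: "N \<ge> 1"
  shows "(\<integral>z. f (gq h N z) \<partial>P0) = (\<Sum>y\<in>Sg h N. f y * measure P0 (gq h N -` {y}))"
proof -
  interpret prob_space P0 by fact
  have sp: "space P0 = UNIV" by (rule P0_space[OF s])
  have meas: "gq h N -` {y} \<in> sets P0" for y
  proof -
    have "gq h N -` {y} \<inter> space P0 \<in> sets P0"
      by (rule measurable_sets[OF P0_meas[OF s gq_meas]]) simp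
    then show ?thesis by (simp add: sp)
  qed
  have repr: "f (gq h N z) = (\<Sum>y\<in>Sg h N. f y * indicator (gq h N -` {y}) z)" for z
  proof -
    have "(\<Sum>y\<in>Sg h N. f y * indicator (gq h N -` {y}) z) = (\<Sum>y\<in>Sg h N. if y = gq h N z then f y else 0)"
      by (intro sum.cong) (auto simp: indicator_def)
    also have "\<dots> = (if gq h N z \<in> Sg h N then f (gq h N z) else 0)" by (rule sum.delta[OF finite_Sg])
    also have "\<dots> = f (gq h N z)" using gq_in_Sg[OF N, of h z] by simp
    finally show ?thesis by simp
  qed
  have "(\<integral>z. f (gq h N z) \<partial>P0) = (\<integral>z. (\<Sum>y\<in>Sg h N. f y * indicator (gq h N -` {y}) z) \<partial>P0)"
    by (simp add: repr[symmetric])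
  also have "\<dots> = (\<Sum>y\<in>Sg h N. (\<integral>z. f y * indicator (gq h N -` {y}) z \<partial>P0))"
  proof -
    have intg: "integrable P0 (\<lambda>z. f y * indicator (gq h N -` {y}) z)" for y
      by (intro integrable_mult_right integrable_real_indicator meas) (simp add: less_top[symmetric])
    show ?thesis using Bochner_Integration.integral_sum[where I="Sg h N" and M=P0 and f="\<lambda>y z. f y * indicator (gq h N -` {y}) z"] intg by simp
  qed
  also have "\<dots> = (\<Sum>y\<in>Sg h N. f y * measure P0 (gq h N -` {y}))"
    by (intro sum.cong refl) (simp add: sp)
  finally show ?thesis .
qed



lemma main_bound:
  fixes a \<epsilon> \<sigma> :: real and P0 :: "(real^'n) measure"
  assumes a: "a > 0" and P: "prob_space P0" and Ps: "sets P0 = sets borel" and Pc: "measure P0 (cube a) = 1"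
    and e0: "0 < \<epsilon>" and e1: "\<epsilon> < exp (-1)" and sg: "0 < \<sigma>"
  shows "\<exists>F :: (real^'n) pmf. finite (set_pmf F) \<and> set_pmf F \<subseteq> cube a \<and> set_pmf F \<subseteq> grid a \<sigma> \<epsilon> \<and>
     real (card (set_pmf F)) \<le> (44 * real CARD('n) * exp 2) ^ CARD('n) * (max (a / \<sigma>) 1 * ln (1 / \<epsilon>)) ^ CARD('n) \<and>
     (\<forall>x. \<bar>mix_dens P0 \<sigma> x - mix_dens (measure_pmf F) \<sigma> x\<bar>
        \<le> (2 ^ CARD('n) * (real CARD('n) * (2 + real CARD('n) / 2) * exp ((real CARD('n))^2 / 2))
           + 2 * 2 ^ CARD('n) * exp ((real CARD('n))^2 + real CARD('n))) * \<epsilon> / \<sigma> ^ CARD('n)) \<and>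
     (\<integral>\<^sup>+ x. ennreal \<bar>mix_dens P0 \<sigma> x - mix_dens (measure_pmf F) \<sigma> x\<bar> \<partial>lborel)
        \<le> ennreal ((2 ^ CARD('n) * (real CARD('n) * (2 + real CARD('n) / 2) * exp ((real CARD('n))^2 / 2))
           + 2 * 2 ^ CARD('n) * exp ((real CARD('n))^2 + real CARD('n))) * \<epsilon>)"
proof -
  interpret prob_space P0 by fact
  define d where "d = real CARD('n)"
  define K where "K = exp (d^2 + d)"
  define K1 where "K1 = d * (2 + d/2) * exp (d^2/2)"
  define dd :: real where "dd = 2 ^ CARD('n)"
  have d1: "d \<ge> 1" by (simp add: d_def)
  have K0: "K \<ge> 0" "K1 \<ge> 0" "dd > 0" using d1 by (auto simp: K_def K1_def dd_def)
  have sp: "space P0 = UNIV" by (rule P0_space[OF Ps])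
  define L where "L = ln (1/\<epsilon>)"
  have eL: "exp 1 < 1/\<epsilon>" using e0 e1 by (simp add: exp_minus field_simps)
  have L1: "L \<ge> 1"
  proof -
    have "ln (exp 1) < ln (1/\<epsilon>)" using eL e0 by (subst ln_less_cancel_iff) auto
    then show ?thesis by (simp add: L_def)
  qed
  have epsL: "exp (-L) = \<epsilon>" using e0 by (simp add: L_def ln_div)
  have e_le1: "\<epsilon> \<le> 1" using e1 by (smt (verit) exp_le_one_iff)
  define h where "h = \<sigma> * \<epsilon>"
  have h0: "h > 0" using sg e0 by (simp add: h_def)
  define N where "N = \<lceil>a / h\<rceil>"
  have N1: "N \<ge> 1" using a h0 by (simp add: N_def)
  define gg where "gg = (gq h N :: real^'n \<Rightarrow> real^'n)"
  define S where "S = (Sg h N :: (real^'n) set)"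
  have Sfin: "finite S" by (simp add: S_def finite_Sg)
  have Scube: "S \<subseteq> cube a" unfolding S_def by (rule Sg_cube[OF h0 N_def])
  have Sgrid: "S \<subseteq> grid a \<sigma> \<epsilon>" unfolding S_def h_def N_def by (rule Sg_grid)
  define q where "q y = measure P0 (gg -` {y})" for y
  have q0: "\<forall>z. 0 \<le> q z" by (simp add: q_def)
  have Qint: "(\<integral>z. g (gg z) \<partial>P0) = (\<Sum>y\<in>S. g y * q y)" for g :: "real^'n \<Rightarrow> real"
    unfolding gg_def S_def q_def by (rule Q_integral[OF P Ps N1])
  have qsum: "(\<Sum>y\<in>S. q y) = 1"
    using Qint[of "\<lambda>_. 1"] by (simp add: prob_space)
  define k where "k = nat \<lceil>4 * d * exp 2 * L\<rceil>"
  have kge: "real k \<ge> 4 * real CARD('n) * exp 2 * L" unfolding k_def d_def by (rule real_nat_ceiling_ge)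
  define Jf where "Jf z = (\<lambda>i. \<lfloor>z$i / \<sigma>\<rfloor>)" for z :: "real^'n"
  define lo where "lo = \<lfloor>-a / \<sigma>\<rfloor>"
  define hi where "hi = \<lfloor>a / \<sigma>\<rfloor>"
  define JB where "JB = {J :: 'n \<Rightarrow> int. \<forall>i. J i \<in> {lo..hi}}"
  have JBeq: "JB = PiE UNIV (\<lambda>_. {lo..hi})" by (auto simp: JB_def PiE_UNIV_domain)
  have JBfin: "finite JB" unfolding JBeq by (rule finite_PiE) auto
  have JBcard: "card JB = (nat (hi - lo + 1)) ^ CARD('n)" unfolding JBeq by (simp add: card_PiE)
  have JS: "\<forall>z\<in>S. Jf z \<in> JB"
  proof
    fix z assume "z \<in> S"
    then have zc: "\<forall>i. \<bar>z$i\<bar> \<le> a" using Scube by (auto simp: cube_def)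
    have "lo \<le> \<lfloor>z$i / \<sigma>\<rfloor> \<and> \<lfloor>z$i / \<sigma>\<rfloor> \<le> hi" for i
    proof -
      have za: "-a \<le> z$i" "z$i \<le> a" using zc[rule_format, of i] by (auto simp: abs_le_iff)
      have "-a / \<sigma> \<le> z$i / \<sigma>" by (rule divide_right_mono[OF za(1)]) (use sg in simp)
      moreover have "z$i / \<sigma> \<le> a / \<sigma>" by (rule divide_right_mono[OF za(2)]) (use sg in simp)
      ultimately have "-a / \<sigma> \<le> z$i / \<sigma>" "z$i / \<sigma> \<le> a / \<sigma>" by auto
      then show ?thesis unfolding lo_def hi_def by (auto intro: floor_mono)
    qed
    then show "Jf z \<in> JB" by (simp add: JB_def Jf_def)
  qed
  define cen where "cen J = (\<chi> i. (real_of_int (J i) + 1/2) * \<sigma>)" for J :: "'n \<Rightarrow> int"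
  define vv where "vv z = (1/\<sigma>) *\<^sub>R (z - cen (Jf z))" for z :: "real^'n"
  have vb: "\<forall>z\<in>S. \<forall>i. \<bar>vv z $ i\<bar> \<le> 1/2"
  proof (intro ballI allI)
    fix z :: "real^'n" and i
    have "vv z $ i = z$i/\<sigma> - real_of_int \<lfloor>z$i / \<sigma>\<rfloor> - 1/2"
      using sg by (simp add: vv_def cen_def Jf_def field_simps)
    moreover have "real_of_int \<lfloor>z$i / \<sigma>\<rfloor> \<le> z$i/\<sigma>" "z$i/\<sigma> < real_of_int \<lfloor>z$i / \<sigma>\<rfloor> + 1"
      by linarith+
    ultimately show "\<bar>vv z $ i\<bar> \<le> 1/2" unfolding abs_le_iff by linarith
  qed
  define T where "T = JB \<times> (boxn (2*k) :: ('n \<Rightarrow> nat) set)"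
  have Tfin: "finite T" using JBfin by (simp add: T_def)
  define m where "m t z = (if Jf z = fst t then mnm (snd t) (vv z) else 0)" for t :: "('n \<Rightarrow> int) \<times> ('n \<Rightarrow> nat)" and z
  obtain f where f0: "\<forall>z. 0 \<le> f z" and fS: "\<forall>z. f z \<noteq> 0 \<longrightarrow> z \<in> S \<and> q z \<noteq> 0"
    and fcard: "card {z\<in>S. f z \<noteq> 0} \<le> card T"
    and fmom: "\<forall>t\<in>T. (\<Sum>z\<in>S. f z * m t z) = (\<Sum>z\<in>S. q z * m t z)"
    using caratheodory_weights[OF Tfin Sfin q0, of m] by blast
  have zbox: "(\<lambda>_. 0) \<in> boxn (2*k)" by (simp add: boxn_def)
  have mnm0: "mnm (\<lambda>_. 0) v = 1" for v :: "real^'n" by (simp add: mnm_def)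
  define mass where "mass J = (\<Sum>z\<in>{z\<in>S. Jf z = J}. q z)" for J
  have fmass: "(\<Sum>z\<in>{z\<in>S. Jf z = J}. f z) = mass J" if J: "J \<in> JB" for J
  proof -
    have "(\<Sum>z\<in>S. f z * m (J, \<lambda>_. 0) z) = (\<Sum>z\<in>S. q z * m (J, \<lambda>_. 0) z)"
      using fmom J zbox by (auto simp: T_def)
    moreover have "(\<Sum>z\<in>S. g z * m (J, \<lambda>_. 0) z) = (\<Sum>z\<in>{z\<in>S. Jf z = J}. g z)" for g
      using Sfin by (simp add: m_def mnm0 sum.inter_filter[symmetric] if_distrib cong: if_cong)
    ultimately show ?thesis by (simp add: mass_def)
  qed
  have imJ: "Jf ` S \<subseteq> JB" using JS by auto
  have masssum: "(\<Sum>J\<in>JB. mass J) = 1"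
    using sum.group[OF Sfin JBfin imJ, of q] qsum by (simp add: mass_def)
  have fsum: "(\<Sum>z\<in>S. f z) = 1"
  proof -
    have "(\<Sum>z\<in>S. f z) = (\<Sum>J\<in>JB. \<Sum>z\<in>{z\<in>S. Jf z = J}. f z)"
      using sum.group[OF Sfin JBfin imJ, of f] by simp
    also have "\<dots> = (\<Sum>J\<in>JB. mass J)" by (intro sum.cong refl fmass)
    finally show ?thesis using masssum by simp
  qed
  have fprob: "(\<integral>\<^sup>+x. ennreal (f x) \<partial>count_space UNIV) = 1"
  proof -
    have "(\<integral>\<^sup>+x. ennreal (f x) \<partial>count_space UNIV) = (\<Sum>x\<in>S. ennreal (f x))"
      by (rule nn_integral_count_space'[OF Sfin]) (use fS in force)+
    also have "\<dots> = ennreal (\<Sum>x\<in>S. f x)" using f0 by simp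
    finally show ?thesis using fsum by simp
  qed
  define F where "F = embed_pmf f"
  have pmfF: "pmf F x = f x" for x unfolding F_def by (rule pmf_embed_pmf[OF _ fprob]) (use f0 in auto)
  have setF: "set_pmf F = {x. f x \<noteq> 0}" unfolding F_def by (rule set_embed_pmf[OF _ fprob]) (use f0 in auto)
  have setFS: "set_pmf F \<subseteq> S" using setF fS by auto
  have setFS': "set_pmf F = {z\<in>S. f z \<noteq> 0}" using setF fS by auto
  have cardT: "card T = card JB * (2*k+1) ^ CARD('n)"
    by (simp add: T_def card_cartesian_product card_boxn)
  define M where "M = max (a/\<sigma>) 1"
  have M1: "M \<ge> 1" by (simp add: M_def)
  have JBb: "real (card JB) \<le> (4 * M) ^ CARD('n)"
  proof -
    have "real_of_int hi \<le> a/\<sigma>" "-a/\<sigma> < real_of_int lo + 1" unfolding hi_def lo_def by linarith+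
    then have "real_of_int (hi - lo + 1) \<le> 2 * (a/\<sigma>) + 2" by simp
    also have "\<dots> \<le> 4 * M" unfolding M_def by simp
    finally have hl: "real_of_int (hi - lo + 1) \<le> 4 * M" .
    have "real (nat (hi - lo + 1)) \<le> 4 * M"
    proof (cases "hi - lo + 1 \<ge> 0")
      case True then show ?thesis using hl by simp
    next
      case False then show ?thesis using M1 by simp
    qed
    then have "real (nat (hi - lo + 1)) ^ CARD('n) \<le> (4 * M) ^ CARD('n)" by (intro power_mono) auto
    then show ?thesis unfolding JBcard by simp
  qed
  have kb: "real (2*k+1) \<le> 11 * d * exp 2 * L"
  proof -
    have x0: "0 \<le> 4 * d * exp 2 * L" using d1 L1 by simp
    have "real k = real_of_int \<lceil>4 * d * exp 2 * L\<rceil>" unfolding k_def using x0 by simp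
    then have "real k < 4 * d * exp 2 * L + 1" using ceiling_correct[of "4 * d * exp 2 * L"] by linarith
    then have a1: "real (2*k+1) < 8 * d * exp 2 * L + 3" by simp
    have "1 * 1 \<le> d * exp 2" by (rule mult_mono) (use d1 in auto)
    then have "1 * 1 \<le> (d * exp 2) * L" by (intro mult_mono) (use L1 in auto)
    then show ?thesis using a1 by simp
  qed
  have cardb: "real (card (set_pmf F)) \<le> (44 * d * exp 2) ^ CARD('n) * (M * L) ^ CARD('n)"
  proof -
    have "real (card (set_pmf F)) \<le> real (card T)" unfolding setFS' using fcard by simp
    also have "\<dots> = real (card JB) * real (2*k+1) ^ CARD('n)" by (simp add: cardT)
    also have "\<dots> \<le> (4 * M) ^ CARD('n) * (11 * d * exp 2 * L) ^ CARD('n)"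
      using JBb kb by (intro mult_mono power_mono) auto
    also have "\<dots> = (44 * d * exp 2) ^ CARD('n) * (M * L) ^ CARD('n)"
    proof -
      have "(4 * M) * (11 * d * exp 2 * L) = (44 * d * exp 2) * (M * L)" by (simp add: algebra_simps)
      then show ?thesis by (metis power_mult_distrib)
    qed
    finally show ?thesis .
  qed
  have mixF: "mix_dens (measure_pmf F) \<sigma> x = (\<Sum>z\<in>S. f z * gauss_dens \<sigma> (x - z))" for x
  proof -
    have "mix_dens (measure_pmf F) \<sigma> x = (\<Sum>z\<in>S. gauss_dens \<sigma> (x - z) * pmf F z)"
      unfolding mix_dens_def by (rule integral_measure_pmf_real[OF Sfin]) (use setFS in auto)
    then show ?thesis by (simp add: pmfF mult.commute)
  qed
  define Q where "Q x = (\<Sum>z\<in>S. q z * gauss_dens \<sigma> (x - z))" for x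
  have QP: "Q x = (\<integral>z. gauss_dens \<sigma> (x - gg z) \<partial>P0)" for x
    unfolding Q_def using Qint[of "\<lambda>y. gauss_dens \<sigma> (x - y)"] by (simp add: mult.commute)
  have sg2: "2 * \<sigma> > 0" using sg by simp
  define G1 where "G1 x = (\<integral>z. gauss_dens (2 * \<sigma>) (x - z) \<partial>P0)" for x
  have E1: "\<bar>mix_dens P0 \<sigma> x - Q x\<bar> \<le> dd * K1 * \<epsilon> * G1 x" for x
  proof -
    have i1: "integrable P0 (\<lambda>z. gauss_dens \<sigma> (x - z))" by (rule int_gauss[OF P Ps sg])
    have i2: "integrable P0 (\<lambda>z. gauss_dens \<sigma> (x - gg z))" unfolding gg_def by (rule int_gauss_gq[OF P Ps sg])
    have i3: "integrable P0 (\<lambda>z. gauss_dens (2 * \<sigma>) (x - z))" by (rule int_gauss[OF P Ps sg2])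
    have "mix_dens P0 \<sigma> x - Q x = (\<integral>z. gauss_dens \<sigma> (x - z) - gauss_dens \<sigma> (x - gg z) \<partial>P0)"
      unfolding mix_dens_def QP using i1 i2 by simp
    then have "\<bar>mix_dens P0 \<sigma> x - Q x\<bar> \<le> (\<integral>z. \<bar>gauss_dens \<sigma> (x - z) - gauss_dens \<sigma> (x - gg z)\<bar> \<partial>P0)"
      using integral_norm_bound[of P0 "\<lambda>z. gauss_dens \<sigma> (x - z) - gauss_dens \<sigma> (x - gg z)"] by simp
    also have "\<dots> \<le> (\<integral>z. dd * K1 * \<epsilon> * gauss_dens (2 * \<sigma>) (x - z) \<partial>P0)"
    proof (rule integral_mono_AE)
      show "integrable P0 (\<lambda>z. \<bar>gauss_dens \<sigma> (x - z) - gauss_dens \<sigma> (x - gg z)\<bar>)"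
        using i1 i2 by auto
      show "integrable P0 (\<lambda>z. dd * K1 * \<epsilon> * gauss_dens (2 * \<sigma>) (x - z))"
        using i3 by auto
      have "AE z in P0. z \<in> cube a" by (rule AE_prob_1) (use Pc in simp)
      then show "AE z in P0. \<bar>gauss_dens \<sigma> (x - z) - gauss_dens \<sigma> (x - gg z)\<bar> \<le> dd * K1 * \<epsilon> * gauss_dens (2 * \<sigma>) (x - z)"
      proof (rule AE_mp, intro AE_I2 impI)
        fix z :: "real^'n" assume z: "z \<in> cube a"
        have zz: "\<forall>i. \<bar>(z - gg z) $ i\<bar> \<le> \<sigma> * \<epsilon>"
          using gq_err[OF h0 N_def z a] by (simp add: gg_def h_def)
        show "\<bar>gauss_dens \<sigma> (x - z) - gauss_dens \<sigma> (x - gg z)\<bar> \<le> dd * K1 * \<epsilon> * gauss_dens (2 * \<sigma>) (x - z)"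
          using gauss_shift[OF sg less_imp_le[OF e0] e_le1 zz, of x] by (simp add: dd_def K1_def d_def mult_ac)
      qed
    qed
    also have "\<dots> = dd * K1 * \<epsilon> * G1 x" by (simp add: G1_def)
    finally show ?thesis .
  qed
  have G1b: "G1 x \<le> 1 / \<sigma> ^ CARD('n)" for x
  proof -
    have "G1 x \<le> (\<integral>z. 1 / \<sigma> ^ CARD('n) \<partial>P0)"
      unfolding G1_def
    proof (rule integral_mono)
      show "integrable P0 (\<lambda>z. gauss_dens (2 * \<sigma>) (x - z))" by (rule int_gauss[OF P Ps sg2])
      fix z
      have "gauss_dens (2 * \<sigma>) (x - z) \<le> 1 / (2 * \<sigma>) ^ CARD('n)" by (rule gauss_le[OF sg2])
      also have "\<dots> \<le> 1 / \<sigma> ^ CARD('n)" using sg by (intro divide_left_mono power_mono) auto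
      finally show "gauss_dens (2 * \<sigma>) (x - z) \<le> 1 / \<sigma> ^ CARD('n)" .
    qed simp
    then show ?thesis by (simp add: prob_space)
  qed
  define E2 where "E2 x = (\<Sum>J\<in>JB. 2 * mass J * K * \<epsilon> * dd * gauss_dens (2 * \<sigma>) (x - cen J))" for x
  have E2: "\<bar>Q x - mix_dens (measure_pmf F) \<sigma> x\<bar> \<le> E2 x" for x
  proof -
    define w where "w z = q z - f z" for z
    have momw: "\<forall>J\<in>JB. \<forall>b\<in>boxn (2*k). (\<Sum>z\<in>S. w z * (if Jf z = J then mnm b (vv z) else 0)) = 0"
    proof (intro ballI)
      fix J and b :: "'n \<Rightarrow> nat" assume J: "J \<in> JB" and b: "b \<in> boxn (2*k)"
      have "(J, b) \<in> T" using J b by (simp add: T_def)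
      then have "(\<Sum>z\<in>S. f z * m (J, b) z) = (\<Sum>z\<in>S. q z * m (J, b) z)" using fmom by blast
      then have "(\<Sum>z\<in>S. f z * (if Jf z = J then mnm b (vv z) else 0)) = (\<Sum>z\<in>S. q z * (if Jf z = J then mnm b (vv z) else 0))"
        unfolding m_def prod.sel .
      then show "(\<Sum>z\<in>S. w z * (if Jf z = J then mnm b (vv z) else 0)) = 0"
        by (simp add: w_def left_diff_distrib sum_subtractf)
    qed
    have vvd: "\<forall>z. vv z = (1/\<sigma>) *\<^sub>R (z - cen (Jf z))" by (simp add: vv_def)
    have "\<bar>\<Sum>z\<in>S. w z * gauss_dens \<sigma> (x - z)\<bar>
       \<le> (\<Sum>J\<in>JB. (\<Sum>z\<in>{z\<in>S. Jf z = J}. \<bar>w z\<bar>) * exp ((real CARD('n))^2 + real CARD('n)) * exp (-L)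
            * (2 ^ CARD('n) * gauss_dens (2 * \<sigma>) (x - cen J)))"
      by (rule QF_bound[OF Sfin JBfin JS vvd vb momw L1 kge sg])
    also have "\<dots> \<le> E2 x" unfolding E2_def
    proof (intro sum_mono)
      fix J assume J: "J \<in> JB"
      have "(\<Sum>z\<in>{z\<in>S. Jf z = J}. \<bar>w z\<bar>) \<le> (\<Sum>z\<in>{z\<in>S. Jf z = J}. q z + f z)"
      proof (intro sum_mono)
        fix z have "0 \<le> q z" "0 \<le> f z" using q0 f0 by auto
        then show "\<bar>w z\<bar> \<le> q z + f z" unfolding w_def abs_le_iff by linarith
      qed
      also have "\<dots> = 2 * mass J" using fmass[OF J] by (simp add: sum.distrib mass_def)
      finally have wb: "(\<Sum>z\<in>{z\<in>S. Jf z = J}. \<bar>w z\<bar>) \<le> 2 * mass J" .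
      have g0: "0 \<le> exp ((real CARD('n))^2 + real CARD('n)) * exp (-L) * (2 ^ CARD('n) * gauss_dens (2 * \<sigma>) (x - cen J))"
        by (simp add: gauss_nonneg)
      have "(\<Sum>z\<in>{z\<in>S. Jf z = J}. \<bar>w z\<bar>) * exp ((real CARD('n))^2 + real CARD('n)) * exp (-L)
            * (2 ^ CARD('n) * gauss_dens (2 * \<sigma>) (x - cen J))
          \<le> 2 * mass J * (exp ((real CARD('n))^2 + real CARD('n)) * exp (-L) * (2 ^ CARD('n) * gauss_dens (2 * \<sigma>) (x - cen J)))"
        using mult_right_mono[OF wb g0] by (simp add: mult.assoc)
      then show "(\<Sum>z\<in>{z\<in>S. Jf z = J}. \<bar>w z\<bar>) * exp ((real CARD('n))^2 + real CARD('n)) * exp (-L)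
            * (2 ^ CARD('n) * gauss_dens (2 * \<sigma>) (x - cen J))
          \<le> 2 * mass J * K * \<epsilon> * dd * gauss_dens (2 * \<sigma>) (x - cen J)"
        by (simp add: epsL K_def d_def dd_def mult_ac)
    qed
    moreover have "(\<Sum>z\<in>S. w z * gauss_dens \<sigma> (x - z)) = Q x - mix_dens (measure_pmf F) \<sigma> x"
      by (simp add: w_def Q_def mixF left_diff_distrib sum_subtractf)
    ultimately show ?thesis by simp
  qed
  have mass0: "mass J \<ge> 0" for J by (simp add: mass_def sum_nonneg q0)
  have E2b: "E2 x \<le> 2 * K * \<epsilon> * dd / \<sigma> ^ CARD('n)" for x
  proof -
    have "E2 x \<le> (\<Sum>J\<in>JB. 2 * mass J * K * \<epsilon> * dd * (1 / \<sigma> ^ CARD('n)))"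
      unfolding E2_def
    proof (intro sum_mono mult_left_mono)
      fix J
      have "gauss_dens (2 * \<sigma>) (x - cen J) \<le> 1 / (2 * \<sigma>) ^ CARD('n)" by (rule gauss_le[OF sg2])
      also have "\<dots> \<le> 1 / \<sigma> ^ CARD('n)" using sg by (intro divide_left_mono power_mono) auto
      finally show "gauss_dens (2 * \<sigma>) (x - cen J) \<le> 1 / \<sigma> ^ CARD('n)" .
      show "0 \<le> 2 * mass J * K * \<epsilon> * dd" using mass0[of J] K0 e0 by simp
    qed
    also have "\<dots> = 2 * K * \<epsilon> * dd / \<sigma> ^ CARD('n) * (\<Sum>J\<in>JB. mass J)"
      by (simp add: sum_distrib_left sum_distrib_right sum_divide_distrib mult_ac)
    finally show ?thesis using masssum by simp
  qed
  define C where "C = dd * K1 + 2 * dd * K"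
  have sup: "\<bar>mix_dens P0 \<sigma> x - mix_dens (measure_pmf F) \<sigma> x\<bar> \<le> C * \<epsilon> / \<sigma> ^ CARD('n)" for x
  proof -
    have "\<bar>mix_dens P0 \<sigma> x - mix_dens (measure_pmf F) \<sigma> x\<bar> \<le> \<bar>mix_dens P0 \<sigma> x - Q x\<bar> + \<bar>Q x - mix_dens (measure_pmf F) \<sigma> x\<bar>"
      by linarith
    also have "\<dots> \<le> dd * K1 * \<epsilon> * (1 / \<sigma> ^ CARD('n)) + 2 * K * \<epsilon> * dd / \<sigma> ^ CARD('n)"
    proof (intro add_mono)
      have "dd * K1 * \<epsilon> * G1 x \<le> dd * K1 * \<epsilon> * (1 / \<sigma> ^ CARD('n))"
        using G1b[of x] K0 e0 by (intro mult_left_mono) auto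
      then show "\<bar>mix_dens P0 \<sigma> x - Q x\<bar> \<le> dd * K1 * \<epsilon> * (1 / \<sigma> ^ CARD('n))" using E1[of x] by linarith
      show "\<bar>Q x - mix_dens (measure_pmf F) \<sigma> x\<bar> \<le> 2 * K * \<epsilon> * dd / \<sigma> ^ CARD('n)"
        using E2[of x] E2b[of x] by linarith
    qed
    also have "\<dots> = C * \<epsilon> / \<sigma> ^ CARD('n)" by (simp add: C_def add_divide_distrib algebra_simps)
    finally show ?thesis .
  qed
  have st: "sets (lborel \<Otimes>\<^sub>M P0) = sets (lborel \<Otimes>\<^sub>M (borel :: (real^'n) measure))"
    by (rule sets_pair_measure_cong) (simp_all add: Ps)
  have meas_pair: "(\<lambda>(x, z). ennreal (gauss_dens (2 * \<sigma>) (x - z))) \<in> borel_measurable (lborel \<Otimes>\<^sub>M P0)"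
  proof -
    have "(\<lambda>p. ennreal (gauss_dens (2 * \<sigma>) (fst p - snd p))) \<in> borel_measurable (lborel \<Otimes>\<^sub>M (borel :: (real^'n) measure))"
      by measurable
    then show ?thesis unfolding case_prod_beta measurable_cong_sets[OF st refl] .
  qed
  interpret PS: pair_sigma_finite lborel P0
    by (intro pair_sigma_finite.intro sigma_finite_lborel prob_space_imp_sigma_finite P)
  define G1n where "G1n x = (\<integral>\<^sup>+z. ennreal (gauss_dens (2 * \<sigma>) (x - z)) \<partial>P0)" for x
  have G1n_eq: "G1n x = ennreal (G1 x)" for x
    unfolding G1n_def G1_def
    by (rule nn_integral_eq_integral[OF int_gauss[OF P Ps sg2]]) (simp add: gauss_nonneg)
  have G1n_meas: "G1n \<in> borel_measurable lborel"
    unfolding G1n_def[abs_def] by (rule borel_measurable_nn_integral) (use meas_pair in simp)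
  have G1int: "(\<integral>\<^sup>+x. G1n x \<partial>lborel) = 1"
  proof -
    have "(\<integral>\<^sup>+x. G1n x \<partial>lborel) = (\<integral>\<^sup>+z. (\<integral>\<^sup>+x. ennreal (gauss_dens (2 * \<sigma>) (x - z)) \<partial>lborel) \<partial>P0)"
      unfolding G1n_def by (rule PS.Fubini'[symmetric]) (use meas_pair in simp)
    also have "\<dots> = (\<integral>\<^sup>+z. 1 \<partial>P0)" by (simp add: gauss_int[OF sg2])
    also have "\<dots> = 1" by (simp add: emeasure_space_1)
    finally show ?thesis .
  qed
  have E2meas: "(\<lambda>x. ennreal (E2 x)) \<in> borel_measurable lborel"
    unfolding E2_def by measurable
  have E2int: "(\<integral>\<^sup>+x. ennreal (E2 x) \<partial>lborel) = ennreal (2 * K * \<epsilon> * dd)"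
  proof -
    have c0: "0 \<le> 2 * mass J * K * \<epsilon> * dd" for J using mass0[of J] K0 e0 by simp
    have "(\<integral>\<^sup>+x. ennreal (E2 x) \<partial>lborel)
        = (\<integral>\<^sup>+x. (\<Sum>J\<in>JB. ennreal (2 * mass J * K * \<epsilon> * dd) * ennreal (gauss_dens (2 * \<sigma>) (x - cen J))) \<partial>lborel)"
      unfolding E2_def using c0 by (intro nn_integral_cong) (simp add: ennreal_mult[symmetric] gauss_nonneg sum_nonneg)
    also have "\<dots> = (\<Sum>J\<in>JB. (\<integral>\<^sup>+x. ennreal (2 * mass J * K * \<epsilon> * dd) * ennreal (gauss_dens (2 * \<sigma>) (x - cen J)) \<partial>lborel))"
      by (rule nn_integral_sum) measurable
    also have "\<dots> = (\<Sum>J\<in>JB. ennreal (2 * mass J * K * \<epsilon> * dd))"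
      by (intro sum.cong refl) (simp add: nn_integral_cmult gauss_int[OF sg2])
    also have "\<dots> = ennreal (\<Sum>J\<in>JB. 2 * mass J * K * \<epsilon> * dd)" using c0 by simp
    also have "(\<Sum>J\<in>JB. 2 * mass J * K * \<epsilon> * dd) = (\<Sum>J\<in>JB. (2 * K * \<epsilon> * dd) * mass J)"
      by (simp add: mult_ac)
    also have "\<dots> = 2 * K * \<epsilon> * dd * (\<Sum>J\<in>JB. mass J)"
      by (rule sum_distrib_left[symmetric])
    finally show ?thesis using masssum by simp
  qed
  have pw: "ennreal \<bar>mix_dens P0 \<sigma> x - mix_dens (measure_pmf F) \<sigma> x\<bar> \<le> ennreal (dd * K1 * \<epsilon>) * G1n x + ennreal (E2 x)" for x
  proof -
    have "\<bar>mix_dens P0 \<sigma> x - mix_dens (measure_pmf F) \<sigma> x\<bar> \<le> \<bar>mix_dens P0 \<sigma> x - Q x\<bar> + \<bar>Q x - mix_dens (measure_pmf F) \<sigma> x\<bar>"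
      by linarith
    also have "\<dots> \<le> dd * K1 * \<epsilon> * G1 x + E2 x" using E1[of x] E2[of x] by linarith
    finally have "ennreal \<bar>mix_dens P0 \<sigma> x - mix_dens (measure_pmf F) \<sigma> x\<bar> \<le> ennreal (dd * K1 * \<epsilon> * G1 x + E2 x)"
      by (rule ennreal_leI)
    also have "\<dots> = ennreal (dd * K1 * \<epsilon>) * G1n x + ennreal (E2 x)"
    proof -
      have g: "0 \<le> G1 x" unfolding G1_def by (rule integral_nonneg_AE) (simp add: gauss_nonneg)
      have e: "0 \<le> E2 x" unfolding E2_def using mass0 K0 e0 by (intro sum_nonneg) (simp add: gauss_nonneg)
      have c: "0 \<le> dd * K1 * \<epsilon>" using K0 e0 by simp
      show ?thesis using g e c by (simp add: G1n_eq ennreal_mult)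
    qed
    finally show ?thesis .
  qed
  have L1b: "(\<integral>\<^sup>+ x. ennreal \<bar>mix_dens P0 \<sigma> x - mix_dens (measure_pmf F) \<sigma> x\<bar> \<partial>lborel) \<le> ennreal (C * \<epsilon>)"
  proof -
    have "(\<integral>\<^sup>+ x. ennreal \<bar>mix_dens P0 \<sigma> x - mix_dens (measure_pmf F) \<sigma> x\<bar> \<partial>lborel)
        \<le> (\<integral>\<^sup>+ x. ennreal (dd * K1 * \<epsilon>) * G1n x + ennreal (E2 x) \<partial>lborel)"
      by (rule nn_integral_mono) (rule pw)
    also have "\<dots> = ennreal (dd * K1 * \<epsilon>) * (\<integral>\<^sup>+ x. G1n x \<partial>lborel) + (\<integral>\<^sup>+ x. ennreal (E2 x) \<partial>lborel)"
      using G1n_meas E2meas by (simp add: nn_integral_add nn_integral_cmult)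
    also have "\<dots> = ennreal (dd * K1 * \<epsilon>) + ennreal (2 * K * \<epsilon> * dd)" by (simp add: G1int E2int)
    also have "\<dots> = ennreal (C * \<epsilon>)"
      using K0 e0 by (simp add: C_def ennreal_plus[symmetric] algebra_simps del: ennreal_plus)
    finally show ?thesis .
  qed
  show ?thesis
  proof (intro exI[of _ F] conjI)
    show "finite (set_pmf F)" using setFS Sfin by (rule finite_subset)
    show "set_pmf F \<subseteq> cube a" using setFS Scube by blast
    show "set_pmf F \<subseteq> grid a \<sigma> \<epsilon>" using setFS Sgrid by blast
    show "real (card (set_pmf F)) \<le> (44 * real CARD('n) * exp 2) ^ CARD('n) * (max (a / \<sigma>) 1 * ln (1 / \<epsilon>)) ^ CARD('n)"
      using cardb by (simp add: d_def M_def L_def)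
    show "\<forall>x. \<bar>mix_dens P0 \<sigma> x - mix_dens (measure_pmf F) \<sigma> x\<bar>
        \<le> (2 ^ CARD('n) * (real CARD('n) * (2 + real CARD('n) / 2) * exp ((real CARD('n))^2 / 2))
           + 2 * 2 ^ CARD('n) * exp ((real CARD('n))^2 + real CARD('n))) * \<epsilon> / \<sigma> ^ CARD('n)"
      using sup by (simp add: C_def dd_def K1_def K_def d_def)
    show "(\<integral>\<^sup>+ x. ennreal \<bar>mix_dens P0 \<sigma> x - mix_dens (measure_pmf F) \<sigma> x\<bar> \<partial>lborel)
        \<le> ennreal ((2 ^ CARD('n) * (real CARD('n) * (2 + real CARD('n) / 2) * exp ((real CARD('n))^2 / 2))
           + 2 * 2 ^ CARD('n) * exp ((real CARD('n))^2 + real CARD('n))) * \<epsilon>)"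
      using L1b by (simp add: C_def dd_def K1_def K_def d_def)
  qed
qed

theorem corollary1:
  fixes a :: real
  assumes a_pos: "a > 0"
  shows "\<exists>D C1 C2 :: real. D > 0 \<and> C1 > 0 \<and> C2 > 0 \<and>
    (\<forall>(P0 :: (real^'n) measure) \<epsilon> \<sigma>.
       prob_space P0 \<longrightarrow> sets P0 = sets borel \<longrightarrow> measure P0 (cube a) = 1 \<longrightarrow>
       0 < \<epsilon> \<longrightarrow> \<epsilon> < exp (-1) \<longrightarrow> 0 < \<sigma> \<longrightarrow>
       (\<exists>F :: (real^'n) pmf.
          finite (set_pmf F) \<and>
          set_pmf F \<subseteq> cube a \<and>
          set_pmf F \<subseteq> grid a \<sigma> \<epsilon> \<and>
          real (card (set_pmf F)) \<le> D * (max (a / \<sigma>) 1 * ln (1 / \<epsilon>)) ^ CARD('n) \<and>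
          (\<forall>x. \<bar>mix_dens P0 \<sigma> x - mix_dens (measure_pmf F) \<sigma> x\<bar> \<le> C1 * \<epsilon> / \<sigma> ^ CARD('n)) \<and>
          (\<integral>\<^sup>+ x. ennreal \<bar>mix_dens P0 \<sigma> x - mix_dens (measure_pmf F) \<sigma> x\<bar> \<partial>lborel)
             \<le> ennreal (C2 * \<epsilon> * sqrt (ln (1 / \<epsilon>)))))"
proof -
  define C where "C = (2 ^ CARD('n) * (real CARD('n) * (2 + real CARD('n) / 2) * exp ((real CARD('n))^2 / 2))
           + 2 * 2 ^ CARD('n) * exp ((real CARD('n))^2 + real CARD('n)))"
  define D where "D = (44 * real CARD('n) * exp 2) ^ CARD('n)"
  have D0: "D > 0" by (simp add: D_def)
  have C0: "C > 0" by (simp add: C_def add_pos_pos)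
  show ?thesis
  proof (rule exI[of _ D], rule exI[of _ C], rule exI[of _ C], intro conjI D0 C0 allI impI)
    fix P0 :: "(real^'n) measure" and \<epsilon> \<sigma> :: real
    assume P: "prob_space P0" and Ps: "sets P0 = sets borel" and Pc: "measure P0 (cube a) = 1"
      and e0: "0 < \<epsilon>" and e1: "\<epsilon> < exp (-1)" and sg: "0 < \<sigma>"
    have L1: "1 \<le> ln (1 / \<epsilon>)"
    proof -
      have eL: "exp 1 < 1/\<epsilon>" using e0 e1 by (simp add: exp_minus field_simps)
      have "ln (exp 1) < ln (1/\<epsilon>)" using eL e0 by (subst ln_less_cancel_iff) auto
      then show ?thesis by simp
    qed
    have sq: "1 \<le> sqrt (ln (1 / \<epsilon>))" using L1 by simp
    obtain F :: "(real^'n) pmf" where F: "finite (set_pmf F)" "set_pmf F \<subseteq> cube a" "set_pmf F \<subseteq> grid a \<sigma> \<epsilon>"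
      "real (card (set_pmf F)) \<le> D * (max (a / \<sigma>) 1 * ln (1 / \<epsilon>)) ^ CARD('n)"
      "\<forall>x. \<bar>mix_dens P0 \<sigma> x - mix_dens (measure_pmf F) \<sigma> x\<bar> \<le> C * \<epsilon> / \<sigma> ^ CARD('n)"
      "(\<integral>\<^sup>+ x. ennreal \<bar>mix_dens P0 \<sigma> x - mix_dens (measure_pmf F) \<sigma> x\<bar> \<partial>lborel) \<le> ennreal (C * \<epsilon>)"
      using main_bound[OF a_pos P Ps Pc e0 e1 sg] unfolding C_def D_def by blast
    have "ennreal (C * \<epsilon>) \<le> ennreal (C * \<epsilon> * sqrt (ln (1 / \<epsilon>)))"
    proof (rule ennreal_leI)
      have "C * \<epsilon> * 1 \<le> C * \<epsilon> * sqrt (ln (1 / \<epsilon>))" using sq C0 e0 by (intro mult_left_mono) auto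
      then show "C * \<epsilon> \<le> C * \<epsilon> * sqrt (ln (1 / \<epsilon>))" by simp
    qed
    then have "(\<integral>\<^sup>+ x. ennreal \<bar>mix_dens P0 \<sigma> x - mix_dens (measure_pmf F) \<sigma> x\<bar> \<partial>lborel)
        \<le> ennreal (C * \<epsilon> * sqrt (ln (1 / \<epsilon>)))" using F(6) by (rule order_trans[rotated])
    then show "\<exists>F :: (real^'n) pmf.
          finite (set_pmf F) \<and>
          set_pmf F \<subseteq> cube a \<and>
          set_pmf F \<subseteq> grid a \<sigma> \<epsilon> \<and>
          real (card (set_pmf F)) \<le> D * (max (a / \<sigma>) 1 * ln (1 / \<epsilon>)) ^ CARD('n) \<and>
          (\<forall>x. \<bar>mix_dens P0 \<sigma> x - mix_dens (measure_pmf F) \<sigma> x\<bar> \<le> C * \<epsilon> / \<sigma> ^ CARD('n)) \<and>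
          (\<integral>\<^sup>+ x. ennreal \<bar>mix_dens P0 \<sigma> x - mix_dens (measure_pmf F) \<sigma> x\<bar> \<partial>lborel)
             \<le> ennreal (C * \<epsilon> * sqrt (ln (1 / \<epsilon>)))"
      using F by blast
  qed
qed

end
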